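(* Let $\mathcal{A}$ be a random set in $\mathcal{B}(n,\alpha)$, let $X := \deg \operatorname{lcm}\big([\mathcal{A}]_q\big)$, and let $f(\alpha) := \frac{3}{\pi^2}\cdot\frac{\alpha\,\mathrm{Li}_2(1-\alpha)}{1-\alpha}$ for $\alpha\in(0,1)$ and $f(1):=\frac{3}{\pi^2}$, where $\mathrm{Li}_2(z) := \sum_{k\geq 1} z^k/k^2$. Then, as $\alpha n \to +\infty$, $X \sim f(\alpha)\, n^2$ with probability $1-o(1)$; that is, for every $\varepsilon>0$ and $\delta>0$ there exists $M>0$ such that for all positive integers $n$ and all $\alpha\in(0,1]$ with $\alpha n \geq M$, \[ \mathbb{P}\big[\, |X - f(\alpha) n^2| > \varepsilon f(\alpha) n^2 \,\big] \leq \delta . \]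
   Context: For a positive integer $n$ and $\alpha\in[0,1]$, $\mathcal{B}(n,\alpha)$ denotes the probabilistic model in which a random set $\mathcal{A}\subseteq\{1,\dots,n\}$ is constructed by including each element of $\{1,\dots,n\}$ independently with probability $\alpha$. For an indeterminate $q$ and a positive integer $k$, $[k]_q := 1+q+\cdots+q^{k-1}\in\mathbb{Z}[q]$, and for a set $\mathcal{S}$ of positive integers $[\mathcal{S}]_q := \{[k]_q : k\in\mathcal{S}\}$. The least common multiple is taken in $\mathbb{Q}[q]$ (monic), with $\operatorname{lcm}(\varnothing)=1$ of degree $0$. *)

theory Defs
  imports "HOL-Analysis.Analysis" "HOL-Computational_Algebra.Computational_Algebra" "HOL-Computational_Algebra.Field_as_Ring"
begin

definition qint :: "nat \<Rightarrow> rat poly" where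
  "qint k = (\<Sum>i<k. monom 1 i)"

text \<open>X(A) = deg lcm([A]_q), the lcm taken (monic, normalized) in Q[q]; Lcm {} = 1.\<close>
definition degLcmQ :: "nat set \<Rightarrow> nat" where
  "degLcmQ A = degree (Lcm (qint ` A))"

text \<open>Probability of an event P in the model B(n, alpha): each element of {1..n}
  is included independently with probability alpha.\<close>
definition probB :: "nat \<Rightarrow> real \<Rightarrow> (nat set \<Rightarrow> bool) \<Rightarrow> real" where
  "probB n \<alpha> P = (\<Sum>A\<in>Pow {1..n}. if P A then \<alpha> ^ card A * (1 - \<alpha>) ^ (n - card A) else 0)"

definition Li2 :: "real \<Rightarrow> real" where
  "Li2 z = (\<Sum>k. z ^ (Suc k) / (real (Suc k))\<^sup>2)"

definition fdens :: "real \<Rightarrow> real" where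
  "fdens \<alpha> = (if \<alpha> = 1 then 3 / pi\<^sup>2 else 3 / pi\<^sup>2 * (\<alpha> * Li2 (1 - \<alpha>) / (1 - \<alpha>)))"

end

theory Submission
  imports Defs "HOL-Number_Theory.Totient" "HOL-Real_Asymp.Real_Asymp"
begin

definition xp :: "nat \<Rightarrow> rat poly" where "xp k = monom 1 k - 1"

lemma degree_normalize_rat: "degree (normalize (f::rat poly)) = degree f"
proof (cases "f = 0")
  case False
  have "f = normalize f * unit_factor f" by simp
  moreover have "unit_factor f \<noteq> 0" "normalize f \<noteq> 0" using False by auto
  moreover have "degree (unit_factor f) = 0"
    using False is_unit_iff_degree[of "unit_factor f"] by simp
  ultimately show ?thesis by (metis add_0_right degree_mult_eq)
qed simp

lemma sqf_degree:
  fixes f :: "rat poly"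
  assumes "f \<noteq> 0" "squarefree f"
  shows "degree f = (\<Sum>p\<in>prime_factors f. degree p)"
proof -
  have m: "\<And>p. p \<in> prime_factors f \<Longrightarrow> multiplicity p f = 1"
    using assms squarefree_factorial_semiring' by blast
  have "normalize f = (\<Prod>p\<in>prime_factors f. p ^ multiplicity p f)"
    using prod_prime_factors[OF assms(1)] by simp
  also have "\<dots> = (\<Prod>p\<in>prime_factors f. p)" using m by (intro prod.cong) auto
  finally have "degree f = degree (\<Prod>p\<in>prime_factors f. p)"
    by (metis degree_normalize_rat)
  also have "\<dots> = (\<Sum>p\<in>prime_factors f. degree p)"
    by (rule degree_prod_sum_eq) auto
  finally show ?thesis .
qed

lemma xp_qint: "xp k = [:-1,1:] * qint k"
proof (induction k)
  case 0 then show ?case by (simp add: xp_def qint_def)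
next
  case (Suc k)
  have "qint (Suc k) = qint k + monom 1 k" by (simp add: qint_def)
  then have "[:-1,1:] * qint (Suc k) = xp k + [:-1,1:] * monom 1 k"
    by (simp add: Suc algebra_simps)
  also have "[:-1,1:] * monom 1 k = monom 1 (Suc k) - monom (1::rat) k"
  proof -
    have "[:-1,1:] = monom (1::rat) 1 - 1" by (simp add: monom_Suc monom_0 one_pCons)
    then show ?thesis by (simp add: algebra_simps mult_monom monom_Suc)
  qed
  finally show ?case by (simp add: xp_def)
qed

lemma poly_qint_1: "poly (qint k) 1 = of_nat k"
  by (simp add: qint_def poly_sum poly_monom)

lemma xp_nz: "k > 0 \<Longrightarrow> xp k \<noteq> 0"
  by (auto simp: xp_def monom_eq_1_iff)

lemma sq_dvd_pderiv:
  fixes f p :: "rat poly"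
  assumes "p ^ 2 dvd f" shows "p dvd pderiv f"
proof -
  obtain h where "f = p * p * h" using assms by (auto simp: power2_eq_square elim!: dvdE)
  then have "pderiv f = p * (p * pderiv h + h * pderiv p + h * pderiv p)"
    by (simp add: pderiv_mult algebra_simps)
  then show ?thesis by simp
qed

lemma xp_squarefree: assumes "k > 0" shows "squarefree (xp k)"
proof (rule squarefreeI)
  fix p assume "p ^ 2 dvd xp k"
  then have d1: "p dvd xp k" by (meson dvd_power dvd_trans zero_less_numeral)
  from \<open>p ^ 2 dvd xp k\<close> have "p dvd pderiv (xp k)" by (rule sq_dvd_pderiv)
  also have "pderiv (xp k) = smult (of_nat k) (monom 1 (k - 1))"
    by (simp add: xp_def pderiv_diff pderiv_monom smult_monom)
  finally have "p dvd monom 1 (k - 1)"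
    using assms by (simp add: dvd_smult_cancel)
  then have "p dvd monom 1 1 * monom 1 (k - 1)" by simp
  also have "monom 1 1 * monom (1::rat) (k - 1) = monom 1 k" using assms by (simp add: mult_monom)
  finally have "p dvd monom 1 k - xp k" using d1 by (rule dvd_diff)
  then show "p dvd 1" by (simp add: xp_def)
qed

lemma xp_dvd_mult: "xp a dvd xp (a * m)"
proof (induction m)
  case 0 then show ?case by (simp add: xp_def)
next
  case (Suc m)
  have "xp (a * Suc m) = monom 1 a * xp (a * m) + xp a"
    by (simp add: xp_def algebra_simps mult_monom)
  then show ?case using Suc by simp
qed

lemma xp_dvd: "a dvd b \<Longrightarrow> xp a dvd xp b"
  using xp_dvd_mult by (auto elim!: dvdE)

lemma prime_dvd_xp_sub:
  fixes p :: "rat poly"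
  assumes p: "prime p" and "b \<le> a" and "p dvd xp a" "p dvd xp b"
  shows "p dvd xp (a - b)"
proof -
  have eq: "xp a = monom 1 b * xp (a - b) + xp b"
    using assms(2) by (simp add: xp_def algebra_simps mult_monom)
  have "p dvd monom 1 b * xp (a - b)"
    using assms(3,4) by (metis add_diff_cancel_right' dvd_diff eq)
  moreover have "\<not> p dvd monom 1 b"
  proof
    assume "p dvd monom 1 b"
    then have "p dvd monom 1 b - xp b" using assms(4) by (rule dvd_diff)
    then have "p dvd 1" by (simp add: xp_def)
    with p show False using not_prime_unit by blast
  qed
  ultimately show ?thesis using p prime_dvd_mult_iff by blast
qed

lemma prime_dvd_xp_gcd:
  fixes p :: "rat poly"
  assumes p: "prime p"
  shows "p dvd xp a \<Longrightarrow> p dvd xp b \<Longrightarrow> p dvd xp (gcd a b)"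
proof (induction a b rule: gcd_nat_induct)
  case (step m n)
  have "gcd m n = gcd n (m mod n)" using step(1) by (simp add: gcd_non_0_nat)
  moreover have "p dvd xp (m mod n)"
  proof -
    have "p dvd xp (m - n * (m div n))"
      using prime_dvd_xp_sub[OF p, of "n * (m div n)" m] step xp_dvd[of n "n * (m div n)"]
      by (metis dvd_trans dvd_triv_left mult_le_mono2 div_le_dividend mult.commute
           div_times_less_eq_dividend)
    then show ?thesis by (simp add: minus_mult_div_eq_mod)
  qed
  ultimately show ?case using step by simp
qed simp

definition ordp :: "rat poly \<Rightarrow> nat" where "ordp p = (LEAST k. 0 < k \<and> p dvd xp k)"

lemma ordp_props:
  assumes "p dvd xp m" "m > 0"
  shows "0 < ordp p" "ordp p \<le> m" "p dvd xp (ordp p)"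
proof -
  have "0 < ordp p \<and> p dvd xp (ordp p)" unfolding ordp_def
    by (rule LeastI[of _ m]) (use assms in auto)
  then show "0 < ordp p" "p dvd xp (ordp p)" by auto
  show "ordp p \<le> m" unfolding ordp_def by (rule Least_le) (use assms in auto)
qed

lemma ordp_le: "0 < k \<Longrightarrow> p dvd xp k \<Longrightarrow> ordp p \<le> k"
  unfolding ordp_def by (rule Least_le) simp

lemma ordp_dvd_iff:
  fixes p :: "rat poly"
  assumes p: "prime p" and "p dvd xp m" "m > 0" "k > 0"
  shows "p dvd xp k \<longleftrightarrow> ordp p dvd k"
proof
  assume "ordp p dvd k" then show "p dvd xp k"
    using ordp_props(3)[OF assms(2,3)] xp_dvd dvd_trans by blast
next
  assume k: "p dvd xp k"
  let ?o = "ordp p"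
  have o: "0 < ?o" "p dvd xp ?o" using ordp_props[OF assms(2,3)] by auto
  have g: "p dvd xp (gcd k ?o)" using prime_dvd_xp_gcd[OF p k o(2)] .
  have "gcd k ?o > 0" using assms(4) by simp
  then have "?o \<le> gcd k ?o" using g by (rule ordp_le)
  moreover have "gcd k ?o \<le> ?o" using o(1) by (simp add: gcd_le2_nat)
  ultimately have "gcd k ?o = ?o" by simp
  then show "?o dvd k" by (metis gcd_dvd1)
qed

lemma xp1: "xp 1 = [:-1, 1:]"
  by (simp add: xp_def monom_Suc monom_0 one_pCons)

lemma prime_dvd_xp1:
  fixes p :: "rat poly"
  assumes p: "prime p" and d: "p dvd xp 1"
  shows "p = xp 1"
proof -
  obtain r where r: "xp 1 = p * r" using d by (auto elim: dvdE)
  have pnz: "p \<noteq> 0" using p by auto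
  have rnz: "r \<noteq> 0" using r xp_nz[of 1] by auto
  have "degree p \<noteq> 0" using p pnz is_unit_iff_degree not_prime_unit by blast
  moreover have "degree (xp 1) = degree p + degree r" using r pnz rnz by (simp add: degree_mult_eq)
  moreover have "degree (xp 1) = 1" by (simp only: xp1) simp
  ultimately have "degree r = 0" by linarith
  then obtain c where c: "r = [:c:]" by (meson degree_eq_zeroE)
  with rnz have "c \<noteq> 0" by auto
  then have "p = xp 1 * [:inverse c:]" using r c by (simp add: mult.assoc)
  then have "xp 1 dvd p" by (simp add: dvd_smult)
  moreover have "normalize (xp 1) = xp 1" by (simp only: xp1) (simp add: normalize_poly_eq_map_poly map_poly_pCons)
  moreover have "normalize p = p" using p by simp
  ultimately show ?thesis using d by (metis associated_eqI)
qed

lemma qint_nz: "a > 0 \<Longrightarrow> qint a \<noteq> 0"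
  using poly_qint_1[of a] by auto

lemma pf_qint:
  assumes "a > 0"
  shows "prime_factors (qint a) = {p. prime p \<and> p dvd xp a \<and> p \<noteq> xp 1}"
proof -
  have nd: "\<not> xp 1 dvd qint a"
  proof
    assume "xp 1 dvd qint a"
    then have "[:-1,1:] dvd qint a" by (simp only: xp1)
    then have "poly (qint a) 1 = 0" using poly_eq_0_iff_dvd[of "qint a" 1] by simp
    with assms poly_qint_1[of a] show False by simp
  qed
  show ?thesis
  proof (intro equalityI subsetI)
    fix p assume "p \<in> prime_factors (qint a)"
    then have p: "prime p" "p dvd qint a" by auto
    then have "p dvd xp a" by (metis dvd_mult xp_qint)
    moreover have "p \<noteq> xp 1" using p nd by auto
    ultimately show "p \<in> {p. prime p \<and> p dvd xp a \<and> p \<noteq> xp 1}" using p by auto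
  next
    fix p assume "p \<in> {p. prime p \<and> p dvd xp a \<and> p \<noteq> xp 1}"
    then have p0: "prime p" "p dvd xp a" "p \<noteq> xp 1" by auto
    have e: "xp a = xp 1 * qint a" by (simp only: xp_qint[of a] xp1)
    have p: "prime p" "p dvd xp 1 * qint a" "p \<noteq> xp 1" using p0 e by simp_all
    then have "p dvd xp 1 \<or> p dvd qint a" using prime_dvd_mult_iff by blast
    then have "p dvd qint a" using p prime_dvd_xp1 by blast
    then show "p \<in> prime_factors (qint a)" using p qint_nz[OF assms] by (auto intro: prime_factorsI)
  qed
qed

lemma pf_Lcm:
  assumes "finite A" "0 \<notin> A"
  shows "prime_factors (Lcm (qint ` A)) = (\<Union>a\<in>A. prime_factors (qint a))"
  using assms
proof (induction A rule: finite_induct)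
  case empty then show ?case by simp
next
  case (insert a F)
  have "\<forall>x\<in>F. qint x \<noteq> 0" using insert qint_nz by (metis gr0I insert_iff)
  then have "Lcm (qint ` F) \<noteq> 0" using insert by (auto simp: Lcm_0_iff)
  moreover have "qint a \<noteq> 0" using insert qint_nz by auto
  ultimately show ?case using insert by simp
qed

lemma Lcm_sqf:
  assumes "finite A" "0 \<notin> A"
  shows "squarefree (Lcm (qint ` A))"
proof -
  have pos: "\<Prod>A > 0" using assms by (metis gr0I prod_zero_iff)
  have "Lcm (qint ` A) dvd xp (\<Prod>A)"
  proof (rule Lcm_least)
    fix b assume "b \<in> qint ` A"
    then obtain a where a: "a \<in> A" "b = qint a" by auto
    have "qint a dvd xp a" by (metis dvd_triv_right xp_qint)
    also have "xp a dvd xp (\<Prod>A)" using a assms by (intro xp_dvd dvd_prodI)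
    finally show "b dvd xp (\<Prod>A)" using a by simp
  qed
  then show ?thesis using xp_squarefree[OF pos] squarefree_mono by blast
qed

lemma degLcm_sum:
  assumes "finite A" "0 \<notin> A"
  shows "degLcmQ A = (\<Sum>p\<in>(\<Union>a\<in>A. prime_factors (qint a)). degree p)"
proof -
  have "\<forall>x\<in>A. qint x \<noteq> 0" using assms qint_nz by (metis gr0I)
  then have "Lcm (qint ` A) \<noteq> 0" using assms by (auto simp: Lcm_0_iff)
  then show ?thesis unfolding degLcmQ_def
    using sqf_degree[OF _ Lcm_sqf[OF assms]] pf_Lcm[OF assms] by simp
qed

definition Qd :: "nat \<Rightarrow> rat poly set" where
  "Qd d = {p. prime p \<and> p dvd xp d \<and> ordp p = d}"

definition gq :: "nat \<Rightarrow> nat" where "gq d = (\<Sum>p\<in>Qd d. degree p)"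

lemma Qd_sub: "d > 0 \<Longrightarrow> Qd d \<subseteq> prime_factors (xp d)"
  using xp_nz by (auto simp: Qd_def intro: prime_factorsI)

lemma Qd_finite: "d > 0 \<Longrightarrow> finite (Qd d)"
  using Qd_sub finite_subset by blast

lemma pf_xp:
  assumes "m > 0"
  shows "prime_factors (xp m) = (\<Union>d\<in>{d. d dvd m}. Qd d)"
proof (intro equalityI subsetI)
  fix p assume "p \<in> prime_factors (xp m)"
  then have p: "prime p" "p dvd xp m" by auto
  have "ordp p dvd m" using ordp_dvd_iff[OF p(1) p(2) assms assms] p(2) by simp
  moreover have "p \<in> Qd (ordp p)" using ordp_props[OF p(2) assms] p by (simp add: Qd_def)
  ultimately show "p \<in> (\<Union>d\<in>{d. d dvd m}. Qd d)" by auto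
next
  fix p assume "p \<in> (\<Union>d\<in>{d. d dvd m}. Qd d)"
  then obtain d where d: "d dvd m" "prime p" "p dvd xp d" by (auto simp: Qd_def)
  then have "p dvd xp m" using xp_dvd dvd_trans by blast
  then show "p \<in> prime_factors (xp m)" using d xp_nz[OF assms] by (auto intro: prime_factorsI)
qed

lemma degree_xp: "m > 0 \<Longrightarrow> degree (xp m) = m"
proof -
  assume m: "m > 0"
  have "xp m = monom 1 m + (- 1)" by (simp add: xp_def)
  also have "degree \<dots> = degree (monom (1::rat) m)" using m by (intro degree_add_eq_left) (simp add: degree_monom_eq)
  finally show ?thesis by (simp add: degree_monom_eq)
qed

lemma gq_sum:
  assumes "m > 0"
  shows "(\<Sum>d | d dvd m. gq d) = m"
proof -
  have fin: "finite {d. d dvd m}" using assms by simp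
  have "m = degree (xp m)" using degree_xp[OF assms] by simp
  also have "\<dots> = (\<Sum>p\<in>prime_factors (xp m). degree p)"
    using sqf_degree xp_nz xp_squarefree assms by blast
  also have "\<dots> = (\<Sum>p\<in>(\<Union>d\<in>{d. d dvd m}. Qd d). degree p)" using pf_xp[OF assms] by simp
  also have "\<dots> = (\<Sum>d | d dvd m. gq d)" unfolding gq_def
  proof (rule sum.UNION_disjoint[OF fin])
    show "\<forall>i\<in>{d. d dvd m}. finite (Qd i)" using assms by (auto intro!: Qd_finite intro: gr0I)
    show "\<forall>i\<in>{d. d dvd m}. \<forall>j\<in>{d. d dvd m}. i \<noteq> j \<longrightarrow> Qd i \<inter> Qd j = {}"
      by (auto simp: Qd_def)
  qed
  finally show ?thesis by simp
qed

lemma gq_totient: "d > 0 \<Longrightarrow> gq d = totient d"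
proof (induction d rule: less_induct)
  case (less m)
  have fin: "finite {d. d dvd m}" using less by simp
  have split: "{d. d dvd m} = insert m {d. d dvd m \<and> d \<noteq> m}" by auto
  have "(\<Sum>d | d dvd m \<and> d \<noteq> m. gq d) = (\<Sum>d | d dvd m \<and> d \<noteq> m. totient d)"
  proof (rule sum.cong)
    fix d assume "d \<in> {d. d dvd m \<and> d \<noteq> m}"
    then have "d < m" "d > 0" using less(2) by (auto dest: dvd_imp_le intro: gr0I)
    then show "gq d = totient d" using less by blast
  qed simp
  moreover have "gq m + (\<Sum>d | d dvd m \<and> d \<noteq> m. gq d) = m"
    using gq_sum[OF less(2)] fin by (subst (asm) split) (simp add: sum.insert)
  moreover have "totient m + (\<Sum>d | d dvd m \<and> d \<noteq> m. totient d) = m"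
    using totient_divisor_sum[of m] fin by (subst (asm) split) (simp add: sum.insert)
  ultimately show ?case by simp
qed

lemma U_eq:
  assumes "A \<subseteq> {1..n}"
  shows "(\<Union>a\<in>A. prime_factors (qint a)) = (\<Union>d\<in>{d\<in>{2..n}. \<exists>a\<in>A. d dvd a}. Qd d)"
proof (intro equalityI subsetI)
  fix p assume "p \<in> (\<Union>a\<in>A. prime_factors (qint a))"
  then obtain a where a: "a \<in> A" "p \<in> prime_factors (qint a)" by auto
  have apos: "a > 0" "a \<le> n" using a assms by auto
  have p: "prime p" "p dvd xp a" "p \<noteq> xp 1" using a(2) pf_qint[OF apos(1)] by auto
  let ?d = "ordp p"
  have o: "0 < ?d" "?d \<le> a" "p dvd xp ?d" using ordp_props[OF p(2) apos(1)] by auto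
  have "?d dvd a" using ordp_dvd_iff[OF p(1) p(2) apos(1) apos(1)] p(2) by simp
  moreover have "?d \<noteq> 1" using o(3) p prime_dvd_xp1 by auto
  ultimately have "?d \<in> {d\<in>{2..n}. \<exists>a\<in>A. d dvd a}" using o apos a(1) by auto
  moreover have "p \<in> Qd ?d" using p o by (simp add: Qd_def)
  ultimately show "p \<in> (\<Union>d\<in>{d\<in>{2..n}. \<exists>a\<in>A. d dvd a}. Qd d)" by blast
next
  fix p assume "p \<in> (\<Union>d\<in>{d\<in>{2..n}. \<exists>a\<in>A. d dvd a}. Qd d)"
  then obtain d a where d: "d \<ge> 2" "a \<in> A" "d dvd a" "p \<in> Qd d" by auto
  have apos: "a > 0" using d assms by auto
  have p: "prime p" "p dvd xp d" "ordp p = d" using d by (auto simp: Qd_def)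
  have "p dvd xp a" using p(2) d(3) xp_dvd dvd_trans by blast
  moreover have "p \<noteq> xp 1"
  proof
    assume "p = xp 1"
    then have "ordp p \<le> 1" by (intro ordp_le) auto
    with p d show False by simp
  qed
  ultimately have "p \<in> prime_factors (qint a)" using pf_qint[OF apos] p by auto
  then show "p \<in> (\<Union>a\<in>A. prime_factors (qint a))" using d by auto
qed

lemma degLcm_formula:
  assumes "A \<subseteq> {1..n}"
  shows "degLcmQ A = (\<Sum>d\<in>{d\<in>{2..n}. \<exists>a\<in>A. d dvd a}. totient d)"
proof -
  have fA: "finite A" "0 \<notin> A" using assms finite_subset by auto
  have "degLcmQ A = (\<Sum>p\<in>(\<Union>d\<in>{d\<in>{2..n}. \<exists>a\<in>A. d dvd a}. Qd d). degree p)"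
    using degLcm_sum[OF fA] U_eq[OF assms] by simp
  also have "\<dots> = (\<Sum>d\<in>{d\<in>{2..n}. \<exists>a\<in>A. d dvd a}. gq d)" unfolding gq_def
  proof (rule sum.UNION_disjoint)
    show "\<forall>i\<in>{d\<in>{2..n}. \<exists>a\<in>A. d dvd a}. finite (Qd i)" by (auto intro!: Qd_finite)
  qed (auto simp: Qd_def)
  also have "\<dots> = (\<Sum>d\<in>{d\<in>{2..n}. \<exists>a\<in>A. d dvd a}. totient d)"
    by (rule sum.cong) (auto intro!: gq_totient)
  finally show ?thesis .
qed

definition zt :: real where "zt = pi\<^sup>2 / 6"

lemma zt_sums: "(\<lambda>n. 1 / (real n + 1)\<^sup>2) sums zt"
  using inverse_squares_sums unfolding zt_def by (simp add: add.commute)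

lemma s_eq: "(\<Sum>k=1..N. 1 / (real k)\<^sup>2) = (\<Sum>n<N. 1 / (real n + 1)\<^sup>2)"
proof -
  have "(\<Sum>k=1..N. 1 / (real k)\<^sup>2) = (\<Sum>n<N. 1 / (real (Suc n))\<^sup>2)"
    by (rule sum.reindex_bij_witness[of _ Suc "\<lambda>k. k - 1"]) auto
  then show ?thesis by (simp add: add.commute)
qed

lemma s_le_zt: "(\<Sum>k=1..N. 1 / (real k)\<^sup>2) \<le> zt"
  unfolding s_eq using sum_le_suminf[of "\<lambda>n. 1/(real n+1)^2" "{..<N}"] zt_sums by (simp add: sums_iff)

lemma s_tends: "(\<lambda>N. \<Sum>k=1..N. 1 / (real k)\<^sup>2) \<longlonglongrightarrow> zt"
  unfolding s_eq using zt_sums by (simp add: sums_def)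

lemma zt_tail:
  assumes "\<eta> > 0" shows "\<exists>N0. \<forall>N\<ge>N0. zt - (\<Sum>k=1..N. 1 / (real k)\<^sup>2) \<le> \<eta>"
proof -
  obtain N0 where "\<forall>N\<ge>N0. norm ((\<Sum>k=1..N. 1 / (real k)\<^sup>2) - zt) < \<eta>"
    using s_tends assms unfolding LIMSEQ_iff by blast
  then show ?thesis by (intro exI[of _ N0]) auto
qed

lemma s2_eq: "N \<ge> 1 \<Longrightarrow> (\<Sum>k=2..N. 1 / (real k)\<^sup>2) = (\<Sum>k=1..N. 1 / (real k)\<^sup>2) - 1"
proof -
  assume "N \<ge> 1"
  then have "{1..N} = insert 1 {2..N}" by auto
  then show ?thesis by simp
qed

lemma zt_bound: "zt - 1 \<le> 3/4"
proof -
  have a: "(\<lambda>n. 1 / (real (n + 2) + 1)\<^sup>2) sums (zt - (\<Sum>i<2. 1 / (real i + 1)\<^sup>2))"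
    using sums_split_initial_segment[OF zt_sums, of 2] by simp
  have h: "(\<Sum>i<2::nat. 1 / (real i + 1)\<^sup>2) = 5/4" by (simp add: numeral_2_eq_2)
  have e: "(\<lambda>n. 1 / (real (n + 2) + 1)\<^sup>2) = (\<lambda>n. 1 / (real n + 3)\<^sup>2)"
    by (rule ext) (simp add: add.assoc)
  have a': "(\<lambda>n. 1 / (real n + 3)\<^sup>2) sums (zt - 5/4)" using a unfolding e h .
  have t: "(\<lambda>n. 1 / (real n + 2) - 1 / (real (Suc n) + 2)) sums (1 / (real 0 + 2) - 0)"
    by (rule telescope_sums'[of "\<lambda>n. 1 / (real n + 2)"]) real_asymp
  have le: "1 / (real n + 3)\<^sup>2 \<le> 1 / (real n + 2) - 1 / (real (Suc n) + 2)" for n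
    by (simp add: divide_simps power2_eq_square algebra_simps) (smt (verit) of_nat_0_le_iff mult_nonneg_nonneg)
  have "zt - 5/4 \<le> 1 / (real 0 + 2) - 0" by (rule sums_le[OF le a' t])
  then show ?thesis by simp
qed

lemma zt_pos: "zt \<ge> 1"
  using s_le_zt[of 1] by simp

lemma s2_le: "(\<Sum>k=2..N. 1 / (real k)\<^sup>2) \<le> zt - 1"
  using s2_eq[of N] s_le_zt[of N] zt_pos by (cases "N = 0") auto

definition TT :: "nat \<Rightarrow> nat" where "TT N = (\<Sum>d=1..N. totient d)"

lemma TT_identity: "(\<Sum>k=1..N. TT (N div k)) = (\<Sum>m=1..N. m)"
proof -
  have "(\<Sum>k=1..N. TT (N div k)) = (\<Sum>(k,d)\<in>Sigma {1..N} (\<lambda>k. {1..N div k}). totient d)"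
    unfolding TT_def by (subst sum.Sigma) auto
  also have "\<dots> = (\<Sum>(m,d)\<in>Sigma {1..N} (\<lambda>m. {d. d dvd m}). totient d)"
  proof (rule sum.reindex_bij_witness[of _ "\<lambda>(m,d). (m div d, d)" "\<lambda>(k,d). (k*d, d)"])
    fix a assume "a \<in> Sigma {1..N} (\<lambda>m. {d. d dvd m})"
    then obtain m d where a: "a = (m,d)" "1 \<le> m" "m \<le> N" "d dvd m" by auto
    then have d: "d \<ge> 1" "d \<le> m" by (auto intro: gr0I dest: dvd_imp_le)
    have md: "m div d * d = m" using a by simp
    show "(case (case a of (m, d) \<Rightarrow> (m div d, d)) of (k, d) \<Rightarrow> (k * d, d)) = a"
      using a md by simp
    have "m div d \<ge> 1" proof -
      have "0 < m div d" using d by (simp add: div_greater_zero_iff)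
      then show ?thesis by simp
    qed
    moreover have "m div d \<le> N" using a d by (meson div_le_dividend le_trans)
    moreover have "d \<le> N div (m div d)"
      using md a(3) \<open>m div d \<ge> 1\<close> by (subst less_eq_div_iff_mult_less_eq) (auto simp: mult.commute)
    ultimately show "(case a of (m, d) \<Rightarrow> (m div d, d)) \<in> Sigma {1..N} (\<lambda>k. {1..N div k})"
      using a d by auto
  next
    fix a assume "a \<in> Sigma {1..N} (\<lambda>k. {1..N div k})"
    then obtain k d where a: "a = (k,d)" "1 \<le> k" "k \<le> N" "1 \<le> d" "d \<le> N div k" by auto
    have "k * d \<le> k * (N div k)" using a by simp
    also have "\<dots> \<le> N" by simp
    finally have kd: "k * d \<le> N" .
    show "(case (case a of (k, d) \<Rightarrow> (k * d, d)) of (m, d) \<Rightarrow> (m div d, d)) = a"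
      using a by simp
    show "(case a of (k, d) \<Rightarrow> (k * d, d)) \<in> Sigma {1..N} (\<lambda>m. {d. d dvd m})"
      using a kd by auto
    show "(case (case a of (k, d) \<Rightarrow> (k * d, d)) of (m, d) \<Rightarrow> totient d) = (case a of (k, d) \<Rightarrow> totient d)"
      using a by simp
  qed
  also have "\<dots> = (\<Sum>m=1..N. \<Sum>d | d dvd m. totient d)"
    by (subst sum.Sigma) auto
  also have "\<dots> = (\<Sum>m=1..N. m)" by (simp add: totient_divisor_sum)
  finally show ?thesis .
qed

lemma gauss_real: "real (\<Sum>m=1..N. m) = real N * (real N + 1) / 2"
  by (induction N) (simp_all add: algebra_simps add_divide_distrib)

lemma div_bounds:
  assumes "k > 0"
  shows "real (N div k) \<le> real N / real k" "real N / real k < real (N div k) + 1"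
proof -
  have "N div k * k \<le> N" by simp
  then have "real (N div k) * real k \<le> real N" by (metis of_nat_le_iff of_nat_mult)
  then show "real (N div k) \<le> real N / real k" using assms by (simp add: field_simps)
  have "N < (N div k + 1) * k" using assms
  proof -
    have "N = N div k * k + N mod k" by simp
    also have "\<dots> < N div k * k + k" using assms mod_less_divisor by (intro add_strict_left_mono) blast
    finally show ?thesis by (simp add: algebra_simps)
  qed
  then have "real N < (real (N div k) + 1) * real k" by (metis of_nat_less_iff of_nat_mult of_nat_1 of_nat_add)
  then show "real N / real k < real (N div k) + 1" using assms by (simp add: field_simps)
qed

lemma sq_gap:
  assumes "k > 0" "\<eta> > 0"
  shows "0 \<le> (real N / real k)\<^sup>2 - (real (N div k))\<^sup>2"
        "(real N / real k)\<^sup>2 - (real (N div k))\<^sup>2 \<le> \<eta> * (real N / real k)\<^sup>2 + 1 / \<eta>"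
proof -
  define x where "x = real N / real k"
  define y where "y = real (N div k)"
  have h: "y \<le> x" "x < y + 1" "0 \<le> y" using div_bounds[OF assms(1), of N] unfolding x_def y_def by auto
  show "0 \<le> (real N / real k)\<^sup>2 - (real (N div k))\<^sup>2"
  proof -
    have "y\<^sup>2 \<le> x\<^sup>2" using h by (intro power_mono) auto
    then show ?thesis unfolding x_def y_def by simp
  qed
  have "x\<^sup>2 - y\<^sup>2 = (x - y) * (x + y)" by (simp add: algebra_simps power2_eq_square)
  also have "\<dots> \<le> 1 * (2 * x)" using h by (intro mult_mono) auto
  also have "\<dots> \<le> \<eta> * x\<^sup>2 + 1 / \<eta>"
  proof -
    have "0 \<le> (\<eta> * x - 1)\<^sup>2" by simp
    also have "(\<eta> * x - 1)\<^sup>2 = \<eta> * (\<eta> * x\<^sup>2 + 1 / \<eta> - 2 * x)"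
      using assms by (simp add: power2_eq_square algebra_simps)
    finally have "0 \<le> \<eta> * (\<eta> * x\<^sup>2 + 1 / \<eta> - 2 * x)" .
    then have "0 \<le> \<eta> * x\<^sup>2 + 1 / \<eta> - 2 * x" using assms by (simp add: zero_le_mult_iff)
    then show ?thesis by simp
  qed
  finally show "(real N / real k)\<^sup>2 - (real (N div k))\<^sup>2 \<le> \<eta> * (real N / real k)\<^sup>2 + 1 / \<eta>"
    unfolding x_def y_def .
qed

definition c0 :: real where "c0 = 1 / (2 * zt)"
definition ee :: "nat \<Rightarrow> real" where "ee N = real (TT N) - c0 * (real N)\<^sup>2"

lemma c0_zt: "c0 * zt = 1/2" using zt_pos by (simp add: c0_def)
lemma c0_pos: "c0 > 0" using zt_pos by (simp add: c0_def)

lemma TT_le: "TT N \<le> N * N"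
proof -
  have "TT N \<le> (\<Sum>d=1..N. N)" unfolding TT_def
    by (intro sum_mono) (meson atLeastAtMost_iff le_trans totient_le)
  then show ?thesis by simp
qed

lemma ee_global: "\<bar>ee M\<bar> \<le> (1 + c0) * (real M)\<^sup>2"
proof -
  have "real (TT M) \<le> (real M)\<^sup>2" using TT_le[of M] by (simp add: power2_eq_square) (metis of_nat_le_iff of_nat_mult)
  moreover have "0 \<le> c0 * (real M)\<^sup>2" using c0_pos by simp
  moreover have "(1 + c0) * (real M)\<^sup>2 = (real M)\<^sup>2 + c0 * (real M)\<^sup>2" by (simp add: algebra_simps)
  ultimately show ?thesis unfolding ee_def abs_le_iff by linarith
qed

lemma R_eq:
  "(\<Sum>k=1..N. ee (N div k)) = real N / 2 + c0 * (real N)\<^sup>2 * (zt - (\<Sum>k=1..N. 1 / (real k)\<^sup>2))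
     + c0 * (\<Sum>k=1..N. (real N / real k)\<^sup>2 - (real (N div k))\<^sup>2)"
proof -
  define Q where "Q = (\<Sum>k=1..N. (real (N div k))\<^sup>2)"
  define S where "S = (\<Sum>k=1..N. 1 / (real k)\<^sup>2)"
  define G where "G = (\<Sum>k=1..N. (real N / real k)\<^sup>2 - (real (N div k))\<^sup>2)"
  have "(\<Sum>k=1..N. ee (N div k)) = real (\<Sum>k=1..N. TT (N div k)) - c0 * Q"
    unfolding ee_def Q_def by (simp add: sum_subtractf sum_distrib_left)
  also have "real (\<Sum>k=1..N. TT (N div k)) = real N * (real N + 1) / 2"
    using TT_identity gauss_real by simp
  finally have h1: "(\<Sum>k=1..N. ee (N div k)) = real N * (real N + 1) / 2 - c0 * Q" .
  have "(\<Sum>k=1..N. (real N / real k)\<^sup>2) = (real N)\<^sup>2 * S"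
    unfolding S_def by (simp add: sum_distrib_left power_divide)
  then have h2: "G = (real N)\<^sup>2 * S - Q" unfolding G_def Q_def by (simp add: sum_subtractf)
  have h3: "c0 * (real N)\<^sup>2 * zt = (real N)\<^sup>2 / 2" using c0_zt by (simp add: algebra_simps)
  have h4: "real N * (real N + 1) / 2 = real N / 2 + (real N)\<^sup>2 / 2" by (simp add: algebra_simps power2_eq_square add_divide_distrib)
  have "real N / 2 + c0 * (real N)\<^sup>2 * (zt - S) + c0 * G = real N / 2 + c0 * (real N)\<^sup>2 * zt - c0 * Q"
    unfolding h2 by (simp add: algebra_simps)
  then show ?thesis unfolding S_def[symmetric] G_def[symmetric] using h1 h3 h4 by linarith
qed

lemma R_bound:
  assumes "\<eta> > 0"
  shows "\<exists>K. \<forall>N. \<bar>\<Sum>k=1..N. ee (N div k)\<bar> \<le> \<eta> * (real N)\<^sup>2 + K * real N"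
proof -
  obtain N0 where N0: "\<forall>N\<ge>N0. zt - (\<Sum>k=1..N. 1 / (real k)\<^sup>2) \<le> \<eta> * zt"
    using zt_tail[of "\<eta> * zt"] assms zt_pos by auto
  define K where "K = 1/2 + c0 / \<eta> + real N0 / 2"
  show ?thesis
  proof (intro exI allI)
    fix N
    define sN where "sN = (\<Sum>k=1..N. 1 / (real k)\<^sup>2)"
    have sN: "0 \<le> zt - sN" "sN \<le> zt" using s_le_zt[of N] unfolding sN_def by auto
    have g: "\<forall>k\<in>{1..N}. 0 \<le> (real N / real k)\<^sup>2 - (real (N div k))\<^sup>2 \<and>
        (real N / real k)\<^sup>2 - (real (N div k))\<^sup>2 \<le> \<eta> * (real N / real k)\<^sup>2 + 1 / \<eta>"
      using sq_gap assms by auto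
    define G where "G = (\<Sum>k=1..N. (real N / real k)\<^sup>2 - (real (N div k))\<^sup>2)"
    have G0: "0 \<le> G" unfolding G_def using g by (intro sum_nonneg) auto
    have "G \<le> (\<Sum>k=1..N. \<eta> * (real N / real k)\<^sup>2 + 1 / \<eta>)" unfolding G_def using g by (intro sum_mono) auto
    also have "\<dots> = \<eta> * (real N)\<^sup>2 * sN + real N / \<eta>"
      by (simp add: sN_def sum.distrib sum_distrib_left power_divide)
    also have "\<dots> \<le> \<eta> * (real N)\<^sup>2 * zt + real N / \<eta>" using sN assms by (intro add_right_mono mult_left_mono) auto
    finally have G1: "G \<le> \<eta> * (real N)\<^sup>2 * zt + real N / \<eta>" .
    have T: "c0 * (real N)\<^sup>2 * (zt - sN) \<le> \<eta> * (real N)\<^sup>2 / 2 + real N0 / 2 * real N"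
    proof (cases "N \<ge> N0")
      case True
      then have "zt - sN \<le> \<eta> * zt" using N0 unfolding sN_def by auto
      then have "c0 * (real N)\<^sup>2 * (zt - sN) \<le> c0 * (real N)\<^sup>2 * (\<eta> * zt)" using c0_pos by (intro mult_left_mono) auto
      also have "\<dots> = \<eta> * (real N)\<^sup>2 / 2" using c0_zt by (simp add: algebra_simps)
      finally have "c0 * (real N)\<^sup>2 * (zt - sN) \<le> \<eta> * (real N)\<^sup>2 / 2" .
      moreover have "0 \<le> real N0 / 2 * real N" by simp
      ultimately show ?thesis by linarith
    next
      case False
      have "c0 * (real N)\<^sup>2 * (zt - sN) \<le> c0 * (real N)\<^sup>2 * zt" using sN c0_pos by (intro mult_left_mono) (auto simp: sN_def intro!: sum_nonneg)
      also have "\<dots> = real N * real N / 2" using c0_zt by (simp add: algebra_simps power2_eq_square)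
      also have "\<dots> \<le> real N0 * real N / 2" using False by (intro divide_right_mono mult_right_mono) auto
      finally have "c0 * (real N)\<^sup>2 * (zt - sN) \<le> real N0 * real N / 2" .
      moreover have "0 \<le> \<eta> * (real N)\<^sup>2 / 2" using assms by simp
      ultimately show ?thesis by (simp add: algebra_simps)
    qed
    have R: "(\<Sum>k=1..N. ee (N div k)) = real N / 2 + c0 * (real N)\<^sup>2 * (zt - sN) + c0 * G"
      using R_eq unfolding sN_def G_def .
    have a0: "0 \<le> c0 * (real N)\<^sup>2 * (zt - sN)" using sN c0_pos by simp
    have b0: "0 \<le> c0 * G" using G0 c0_pos by simp
    have b1: "c0 * G \<le> c0 * (\<eta> * (real N)\<^sup>2 * zt + real N / \<eta>)" using G1 c0_pos by (intro mult_left_mono) auto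
    have b2: "c0 * (\<eta> * (real N)\<^sup>2 * zt + real N / \<eta>) = \<eta> * (real N)\<^sup>2 / 2 + c0 / \<eta> * real N"
      using c0_zt by (simp add: algebra_simps)
    have KN: "K * real N = real N / 2 + c0 / \<eta> * real N + real N0 / 2 * real N"
      by (simp add: K_def algebra_simps)
    have "\<bar>\<Sum>k=1..N. ee (N div k)\<bar> = real N / 2 + c0 * (real N)\<^sup>2 * (zt - sN) + c0 * G"
      unfolding R using a0 b0 by simp
    then show "\<bar>\<Sum>k=1..N. ee (N div k)\<bar> \<le> \<eta> * (real N)\<^sup>2 + K * real N"
      using T b1 b2 KN by linarith
  qed
qed

definition Hb :: "real \<Rightarrow> bool" where "Hb t \<longleftrightarrow> (\<exists>C. \<forall>M. \<bar>ee M\<bar> \<le> t * (real M)\<^sup>2 + C)"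

definition rho :: real where "rho = zt - 1"

lemma rho_bounds: "0 \<le> rho" "rho \<le> 3/4"
  using zt_pos zt_bound by (auto simp: rho_def)

lemma Hb_mono: "Hb t \<Longrightarrow> t \<le> t' \<Longrightarrow> Hb t'"
  unfolding Hb_def
proof (elim exE, intro exI allI)
  fix C M assume H: "\<forall>M. \<bar>ee M\<bar> \<le> t * (real M)\<^sup>2 + C" and tt: "t \<le> t'"
  have "t * (real M)\<^sup>2 \<le> t' * (real M)\<^sup>2" using tt by (intro mult_right_mono) auto
  then show "\<bar>ee M\<bar> \<le> t' * (real M)\<^sup>2 + C" using H[rule_format, of M] by linarith
qed

lemma ee_0: "ee 0 = 0" by (simp add: ee_def TT_def)

lemma Hb_step:
  assumes t: "t \<ge> 0" and \<eta>: "\<eta> > 0" and H: "Hb t"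
  shows "Hb (rho * t + \<eta>)"
proof -
  obtain C where C: "\<forall>M. \<bar>ee M\<bar> \<le> t * (real M)\<^sup>2 + C" using H unfolding Hb_def by blast
  have C0: "C \<ge> 0" using C[rule_format, of 0] by (simp add: ee_0)
  obtain K where K: "\<forall>N. \<bar>\<Sum>k=1..N. ee (N div k)\<bar> \<le> \<eta>/2 * (real N)\<^sup>2 + K * real N"
    using R_bound[of "\<eta>/2"] \<eta> by auto
  define N2 :: nat where "N2 = nat \<lceil>2 * (K + C) / \<eta>\<rceil>"
  have main: "\<bar>ee N\<bar> \<le> (rho * t + \<eta>/2) * (real N)\<^sup>2 + (K + C) * real N" if N1: "N \<ge> 1" for N
  proof -
    have split: "{1..N} = insert 1 {2..N}" using N1 by auto
    have R: "(\<Sum>k=1..N. ee (N div k)) = ee N + (\<Sum>k=2..N. ee (N div k))"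
      by (subst split) simp
    have "\<bar>\<Sum>k=2..N. ee (N div k)\<bar> \<le> (\<Sum>k=2..N. \<bar>ee (N div k)\<bar>)" by (rule sum_abs)
    also have "\<dots> \<le> (\<Sum>k=2..N. t * (real N / real k)\<^sup>2 + C)"
    proof (rule sum_mono)
      fix k assume k: "k \<in> {2..N}"
      have "real (N div k) \<le> real N / real k" using div_bounds(1)[of k N] k by auto
      then have "(real (N div k))\<^sup>2 \<le> (real N / real k)\<^sup>2" by (intro power_mono) auto
      then have "t * (real (N div k))\<^sup>2 \<le> t * (real N / real k)\<^sup>2" using t by (intro mult_left_mono) auto
      then show "\<bar>ee (N div k)\<bar> \<le> t * (real N / real k)\<^sup>2 + C" using C[rule_format, of "N div k"] by linarith
    qed
    also have "\<dots> = t * (real N)\<^sup>2 * (\<Sum>k=2..N. 1 / (real k)\<^sup>2) + C * real (N - 1)"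
      by (simp add: sum.distrib sum_distrib_left power_divide)
    also have "\<dots> \<le> t * (real N)\<^sup>2 * rho + C * real N"
    proof (intro add_mono mult_left_mono)
      show "(\<Sum>k=2..N. 1 / (real k)\<^sup>2) \<le> rho" using s2_le unfolding rho_def by simp
    qed (use t C0 in auto)
    finally have S: "\<bar>\<Sum>k=2..N. ee (N div k)\<bar> \<le> t * (real N)\<^sup>2 * rho + C * real N" .
    have "\<bar>ee N\<bar> \<le> \<bar>\<Sum>k=1..N. ee (N div k)\<bar> + \<bar>\<Sum>k=2..N. ee (N div k)\<bar>" unfolding R by linarith
    then show ?thesis using S K[rule_format, of N] by (simp add: algebra_simps)
  qed
  show ?thesis unfolding Hb_def
  proof (intro exI allI)
    fix N
    show "\<bar>ee N\<bar> \<le> (rho * t + \<eta>) * (real N)\<^sup>2 + (1 + c0) * (real N2)\<^sup>2"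
    proof (cases "N \<ge> N2 \<and> N \<ge> 1")
      case True
      have "2 * (K + C) / \<eta> \<le> real N" using True unfolding N2_def by linarith
      then have "K + C \<le> \<eta> / 2 * real N" using \<eta> by (simp add: field_simps)
      then have "(K + C) * real N \<le> \<eta> / 2 * real N * real N" by (intro mult_right_mono) auto
      then have "(K + C) * real N \<le> \<eta> / 2 * (real N)\<^sup>2" by (simp add: power2_eq_square)
      moreover have "0 \<le> (1 + c0) * (real N2)\<^sup>2" using c0_pos by simp
      ultimately show ?thesis using main[of N] True by (simp add: algebra_simps)
    next
      case False
      then have "N < N2 \<or> N = 0" by auto
      then have "(1 + c0) * (real N)\<^sup>2 \<le> (1 + c0) * (real N2)\<^sup>2"
        using c0_pos by (intro mult_left_mono power_mono) auto
      moreover have "0 \<le> (rho * t + \<eta>) * (real N)\<^sup>2" using rho_bounds t \<eta> by simp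
      ultimately show ?thesis using ee_global[of N] by linarith
    qed
  qed
qed

lemma Hb_iter:
  assumes "\<eta> > 0"
  shows "Hb (rho ^ j * (1 + c0) + \<eta> / (1 - rho))"
proof (induction j)
  case 0
  have "Hb (1 + c0)" unfolding Hb_def using ee_global by (intro exI[of _ 0]) simp
  moreover have "0 \<le> \<eta> / (1 - rho)" using assms rho_bounds by simp
  ultimately show ?case using Hb_mono[of "1 + c0"] by simp
next
  case (Suc j)
  have "0 \<le> rho ^ j * (1 + c0)" using rho_bounds c0_pos by simp
  moreover have "0 \<le> \<eta> / (1 - rho)" using assms rho_bounds by simp
  ultimately have "Hb (rho * (rho ^ j * (1 + c0) + \<eta> / (1 - rho)) + \<eta>)"
    using Hb_step[OF _ assms Suc] by simp
  moreover have "rho * (rho ^ j * (1 + c0) + \<eta> / (1 - rho)) + \<eta> = rho ^ Suc j * (1 + c0) + \<eta> / (1 - rho)"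
  proof -
    define x where "x = \<eta> / (1 - rho)"
    have ne: "1 - rho \<noteq> 0" using rho_bounds by simp
    have x: "\<eta> = (1 - rho) * x" unfolding x_def using ne by simp
    show ?thesis unfolding x_def[symmetric] by (simp add: x algebra_simps)
  qed
  ultimately show ?case by simp
qed

lemma Hb_all:
  assumes "\<epsilon> > 0" shows "Hb \<epsilon>"
proof -
  have pos: "\<epsilon> / 2 / (1 + c0) > 0" using assms c0_pos by simp
  have r1: "rho < 1" using rho_bounds by simp
  obtain j where j: "rho ^ j < \<epsilon> / 2 / (1 + c0)"
    using real_arch_pow_inv[OF pos r1] by blast
  define \<eta> where "\<eta> = \<epsilon> * (1 - rho) / 2"
  have \<eta>: "\<eta> > 0" using assms rho_bounds by (simp add: \<eta>_def)
  have H: "Hb (rho ^ j * (1 + c0) + \<eta> / (1 - rho))" using Hb_iter[OF \<eta>] .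
  have "rho ^ j * (1 + c0) < \<epsilon> / 2 / (1 + c0) * (1 + c0)"
    using j c0_pos by (intro mult_strict_right_mono) auto
  also have "\<dots> = \<epsilon> / 2" using c0_pos by (simp add: field_simps)
  finally have a: "rho ^ j * (1 + c0) < \<epsilon> / 2" .
  have ne: "1 - rho \<noteq> 0" using rho_bounds by simp
  have b: "\<eta> / (1 - rho) = \<epsilon> / 2" using ne by (subst divide_eq_eq) (simp add: \<eta>_def)
  have "rho ^ j * (1 + c0) + \<eta> / (1 - rho) \<le> \<epsilon>" using a b by linarith
  then show ?thesis using Hb_mono[OF H] by blast
qed

definition Phi :: "nat \<Rightarrow> real" where "Phi N = real (\<Sum>d=2..N. totient d)"

lemma Phi_TT: "Phi N = (if N = 0 then 0 else real (TT N) - 1)"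
proof (cases "N = 0")
  case False
  then have "{1..N} = insert 1 {2..N}" by auto
  then have "TT N = 1 + (\<Sum>d=2..N. totient d)" unfolding TT_def by simp
  then show ?thesis using False unfolding Phi_def by simp
qed (simp add: Phi_def)

lemma Phi_asym:
  assumes "\<epsilon> > 0" shows "\<exists>C. \<forall>N. \<bar>Phi N - c0 * (real N)\<^sup>2\<bar> \<le> \<epsilon> * (real N)\<^sup>2 + C"
proof -
  obtain C where C: "\<forall>M. \<bar>ee M\<bar> \<le> \<epsilon> * (real M)\<^sup>2 + C" using Hb_all[OF assms] unfolding Hb_def by blast
  show ?thesis
  proof (intro exI allI)
    fix N
    have C0: "C \<ge> 0" using C[rule_format, of 0] by (simp add: ee_0)
    show "\<bar>Phi N - c0 * (real N)\<^sup>2\<bar> \<le> \<epsilon> * (real N)\<^sup>2 + (C + 1)"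
    proof (cases "N = 0")
      case True then show ?thesis using C0 by (simp add: Phi_def)
    next
      case False
      then have "Phi N - c0 * (real N)\<^sup>2 = ee N - 1" by (simp add: Phi_TT ee_def)
      then show ?thesis using C[rule_format, of N] by linarith
    qed
  qed
qed

definition mu :: "nat \<Rightarrow> real \<Rightarrow> real" where
  "mu n \<alpha> = (\<Sum>d=2..n. real (totient d) * (1 - (1 - \<alpha>) ^ (n div d)))"

lemma mu_eq: "mu n \<alpha> = \<alpha> * (\<Sum>j<n. (1 - \<alpha>) ^ j * Phi (n div (j + 1)))"
proof -
  define \<beta> where "\<beta> = 1 - \<alpha>"
  have geo: "1 - \<beta> ^ k = \<alpha> * (\<Sum>j<k. \<beta> ^ j)" for k
    using one_diff_power_eq[of \<beta> k] by (simp add: \<beta>_def)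
  have "mu n \<alpha> = (\<Sum>d=2..n. real (totient d) * (\<alpha> * (\<Sum>j<n div d. \<beta> ^ j)))"
    unfolding mu_def \<beta>_def[symmetric] by (simp add: geo)
  also have "\<dots> = \<alpha> * (\<Sum>d=2..n. \<Sum>j<n. if j < n div d then real (totient d) * \<beta> ^ j else 0)"
  proof -
    have inner: "(\<Sum>j<n div d. \<beta> ^ j) * real (totient d) = (\<Sum>j<n. if j < n div d then real (totient d) * \<beta> ^ j else 0)"
      if "d \<in> {2..n}" for d
    proof -
      have sub: "{..<n div d} \<subseteq> {..<n}" using that by auto
      have "(\<Sum>j<n div d. \<beta> ^ j) * real (totient d) = (\<Sum>j<n div d. real (totient d) * \<beta> ^ j)"
        by (simp add: sum_distrib_left mult.commute)
      also have "\<dots> = (\<Sum>j<n. if j < n div d then real (totient d) * \<beta> ^ j else 0)"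
      proof -
        have e: "{..<n} \<inter> {x. x < n div d} = {..<n div d}"
        proof (intro set_eqI)
          fix x
          have "n div d \<le> n" by (rule div_le_dividend)
          then show "x \<in> {..<n} \<inter> {x. x < n div d} \<longleftrightarrow> x \<in> {..<n div d}"
            unfolding Int_iff mem_Collect_eq lessThan_iff by linarith
        qed
        show ?thesis by (subst sum.If_cases) (simp_all add: e)
      qed
      finally show ?thesis .
    qed
    have "(\<Sum>d=2..n. real (totient d) * (\<alpha> * (\<Sum>j<n div d. \<beta> ^ j)))
        = (\<Sum>d=2..n. \<alpha> * (\<Sum>j<n. if j < n div d then real (totient d) * \<beta> ^ j else 0))"
    proof (rule sum.cong)
      fix d assume "d \<in> {2..n}"
      then show "real (totient d) * (\<alpha> * (\<Sum>j<n div d. \<beta> ^ j)) = \<alpha> * (\<Sum>j<n. if j < n div d then real (totient d) * \<beta> ^ j else 0)"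
        using inner[of d] by (simp only: mult.commute mult.left_commute)
    qed simp
    also have "\<dots> = \<alpha> * (\<Sum>d=2..n. \<Sum>j<n. if j < n div d then real (totient d) * \<beta> ^ j else 0)"
      by (rule sum_distrib_left[symmetric])
    finally show ?thesis .
  qed
  also have "\<dots> = \<alpha> * (\<Sum>j<n. \<Sum>d=2..n. if j < n div d then real (totient d) * \<beta> ^ j else 0)"
    by (subst sum.swap) simp
  also have "\<dots> = \<alpha> * (\<Sum>j<n. \<beta> ^ j * Phi (n div (j + 1)))"
  proof -
    have "(\<Sum>d=2..n. if j < n div d then real (totient d) * \<beta> ^ j else 0) = \<beta> ^ j * Phi (n div (j + 1))" for j
    proof -
      have set: "{d\<in>{2..n}. j < n div d} = {2..n div (j+1)}"
      proof (intro equalityI subsetI)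
        fix d assume d: "d \<in> {d\<in>{2..n}. j < n div d}"
        then have "Suc j \<le> n div d" by auto
        then have "Suc j * d \<le> n" using d by (subst (asm) less_eq_div_iff_mult_less_eq) auto
        then have "d \<le> n div (j+1)" by (subst less_eq_div_iff_mult_less_eq) (auto simp: mult.commute)
        then show "d \<in> {2..n div (j+1)}" using d by auto
      next
        fix d assume d: "d \<in> {2..n div (j+1)}"
        then have "d \<le> n div (j + 1)" by simp
        then have "d * (j + 1) \<le> n" using less_eq_div_iff_mult_less_eq[of "j+1" d n] by simp
        then have "Suc j \<le> n div d" using d by (subst less_eq_div_iff_mult_less_eq) (auto simp: mult.commute)
        moreover have "d \<le> n" using d by (meson atLeastAtMost_iff div_le_dividend le_trans)
        ultimately show "d \<in> {d\<in>{2..n}. j < n div d}" using d by auto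
      qed
      have "(\<Sum>d=2..n. if j < n div d then real (totient d) * \<beta> ^ j else 0)
          = (\<Sum>d\<in>{d\<in>{2..n}. j < n div d}. real (totient d) * \<beta> ^ j)"
        by (rule sum.inter_filter[symmetric]) simp
      also have "\<dots> = \<beta> ^ j * Phi (n div (j + 1))"
        unfolding set Phi_def by (simp add: sum_distrib_left mult.commute)
      finally show ?thesis .
    qed
    then show ?thesis by simp
  qed
  finally show ?thesis by (simp add: \<beta>_def)
qed

definition SB :: "real \<Rightarrow> real" where "SB \<beta> = suminf (\<lambda>k. \<beta> ^ k / (real k + 1)\<^sup>2)"

lemma sb_term_le: "0 \<le> \<beta> \<Longrightarrow> \<beta> \<le> 1 \<Longrightarrow> \<beta> ^ k / (real k + 1)\<^sup>2 \<le> 1 / (real k + 1)\<^sup>2"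
  by (intro divide_right_mono) (auto simp: power_le_one)

lemma sb_summable: assumes "0 \<le> \<beta>" "\<beta> \<le> 1" shows "summable (\<lambda>k. \<beta> ^ k / (real k + 1)\<^sup>2)"
proof (rule summable_comparison_test[where g = "\<lambda>k. 1 / (real k + 1)\<^sup>2"])
  show "\<exists>N. \<forall>n\<ge>N. norm (\<beta> ^ n / (real n + 1)\<^sup>2) \<le> 1 / (real n + 1)\<^sup>2"
    using sb_term_le assms by auto
  show "summable (\<lambda>k. 1 / (real k + 1)\<^sup>2)" using zt_sums sums_summable by blast
qed

lemma sb_ge1: assumes "0 \<le> \<beta>" "\<beta> \<le> 1" shows "1 \<le> SB \<beta>"
  using sum_le_suminf[OF sb_summable[OF assms], of "{..<1}"] assms unfolding SB_def by simp

lemma sb_tail: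
  assumes "0 \<le> \<beta>" "\<beta> \<le> 1"
  shows "0 \<le> SB \<beta> - (\<Sum>j<n. \<beta> ^ j / (real j + 1)\<^sup>2)"
        "SB \<beta> - (\<Sum>j<n. \<beta> ^ j / (real j + 1)\<^sup>2) \<le> zt - (\<Sum>k=1..n. 1 / (real k)\<^sup>2)"
proof -
  define f where "f = (\<lambda>k. \<beta> ^ k / (real k + 1)\<^sup>2)"
  define g where "g = (\<lambda>k. 1 / (real k + 1)\<^sup>2)"
  have sf: "summable f" using sb_summable[OF assms] unfolding f_def .
  have sg: "summable g" using zt_sums sums_summable unfolding g_def by blast
  have ef: "SB \<beta> - (\<Sum>j<n. f j) = (\<Sum>k. f (k + n))"
    using suminf_split_initial_segment[OF sf, of n] unfolding SB_def f_def by simp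
  have eg: "zt - (\<Sum>j<n. g j) = (\<Sum>k. g (k + n))"
    using suminf_split_initial_segment[OF sg, of n] zt_sums unfolding g_def by (simp add: sums_iff)
  have sf': "summable (\<lambda>k. f (k + n))" using sf by (simp add: summable_iff_shift)
  have sg': "summable (\<lambda>k. g (k + n))" using sg by (simp add: summable_iff_shift)
  have "0 \<le> (\<Sum>k. f (k + n))" using sf' assms by (intro suminf_nonneg) (auto simp: f_def)
  then show "0 \<le> SB \<beta> - (\<Sum>j<n. \<beta> ^ j / (real j + 1)\<^sup>2)" using ef unfolding f_def by simp
  have "(\<Sum>k. f (k + n)) \<le> (\<Sum>k. g (k + n))"
  proof (rule suminf_le[OF _ sf' sg'])
    fix k show "f (k + n) \<le> g (k + n)" unfolding f_def g_def by (rule sb_term_le[OF assms])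
  qed
  then show "SB \<beta> - (\<Sum>j<n. \<beta> ^ j / (real j + 1)\<^sup>2) \<le> zt - (\<Sum>k=1..n. 1 / (real k)\<^sup>2)"
    using ef eg unfolding f_def g_def s_eq by simp
qed

lemma c0_eq: "c0 = 3 / pi\<^sup>2"
  unfolding c0_def zt_def by simp

lemma fdens_eq:
  assumes "0 < \<alpha>" "\<alpha> \<le> 1"
  shows "fdens \<alpha> = c0 * \<alpha> * SB (1 - \<alpha>)"
proof (cases "\<alpha> = 1")
  case True
  have "(\<lambda>k. 1 / (real k + 1)\<^sup>2 * 0 ^ k) sums (1 / (real 0 + 1)\<^sup>2)" by (rule powser_sums_zero)
  then have "(\<lambda>k. (0::real) ^ k / (real k + 1)\<^sup>2) sums 1" by simp
  then have "SB 0 = 1" unfolding SB_def by (simp add: sums_iff)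
  then show ?thesis using True by (simp add: fdens_def c0_eq)
next
  case False
  define \<beta> where "\<beta> = 1 - \<alpha>"
  have b: "0 < \<beta>" "\<beta> \<le> 1" using assms False by (auto simp: \<beta>_def)
  have "Li2 \<beta> = (\<Sum>k. \<beta> * (\<beta> ^ k / (real k + 1)\<^sup>2))"
    unfolding Li2_def by (simp add: add.commute)
  also have "\<dots> = \<beta> * SB \<beta>" unfolding SB_def using sb_summable[of \<beta>] b by (intro suminf_mult) auto
  finally have "Li2 \<beta> = \<beta> * SB \<beta>" .
  then show ?thesis using False b unfolding fdens_def \<beta>_def[symmetric] c0_eq
    by (simp add: \<beta>_def)
qed

lemma term_bound:
  assumes C: "\<forall>N. \<bar>Phi N - c0 * (real N)\<^sup>2\<bar> \<le> \<epsilon> * (real N)\<^sup>2 + C"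
    and \<epsilon>: "\<epsilon> \<ge> 0" and \<eta>: "\<eta> > 0"
  shows "\<bar>Phi (n div (j + 1)) - c0 * (real n)\<^sup>2 / (real j + 1)\<^sup>2\<bar>
           \<le> (\<epsilon> + c0 * \<eta>) * ((real n)\<^sup>2 / (real j + 1)\<^sup>2) + (C + c0 / \<eta>)"
proof -
  define x where "x = real n / real (j + 1)"
  define y where "y = real (n div (j + 1))"
  have gap: "0 \<le> x\<^sup>2 - y\<^sup>2" "x\<^sup>2 - y\<^sup>2 \<le> \<eta> * x\<^sup>2 + 1 / \<eta>"
    using sq_gap[of "j+1" \<eta> n] \<eta> unfolding x_def y_def by auto
  have xx: "x\<^sup>2 = (real n)\<^sup>2 / (real j + 1)\<^sup>2" unfolding x_def by (simp add: power_divide add.commute)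
  have "\<bar>Phi (n div (j + 1)) - c0 * x\<^sup>2\<bar> \<le> \<bar>Phi (n div (j + 1)) - c0 * y\<^sup>2\<bar> + c0 * (x\<^sup>2 - y\<^sup>2)"
  proof -
    have h: "0 \<le> c0 * (x\<^sup>2 - y\<^sup>2)" using gap c0_pos by simp
    have eq: "Phi (n div (j + 1)) - c0 * x\<^sup>2 = (Phi (n div (j + 1)) - c0 * y\<^sup>2) - c0 * (x\<^sup>2 - y\<^sup>2)"
      by (simp add: algebra_simps)
    show ?thesis unfolding eq using abs_triangle_ineq4[of "Phi (n div (j + 1)) - c0 * y\<^sup>2" "c0 * (x\<^sup>2 - y\<^sup>2)"] h
      by simp
  qed
  also have "\<dots> \<le> (\<epsilon> * y\<^sup>2 + C) + c0 * (\<eta> * x\<^sup>2 + 1 / \<eta>)"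
    using C[rule_format, of "n div (j+1)"] gap c0_pos unfolding y_def
    by (intro add_mono mult_left_mono) auto
  also have "\<dots> \<le> (\<epsilon> * x\<^sup>2 + C) + c0 * (\<eta> * x\<^sup>2 + 1 / \<eta>)"
    using gap \<epsilon> \<eta> c0_pos by (intro add_mono mult_left_mono) auto
  also have "\<dots> = (\<epsilon> + c0 * \<eta>) * x\<^sup>2 + (C + c0 / \<eta>)" by (simp add: algebra_simps)
  finally show ?thesis unfolding xx by (simp add: mult.assoc)
qed

lemma MU_close:
  assumes \<theta>: "\<theta> > 0"
  shows "\<exists>N1. \<forall>n (\<alpha>::real). n \<ge> N1 \<longrightarrow> 0 < \<alpha> \<longrightarrow> \<alpha> \<le> 1 \<longrightarrow>
           \<bar>mu n \<alpha> - fdens \<alpha> * (real n)\<^sup>2\<bar> \<le> \<theta> * fdens \<alpha> * (real n)\<^sup>2"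
proof -
  define \<epsilon> where "\<epsilon> = \<theta> * c0 / (6 * zt)"
  define \<eta> where "\<eta> = \<theta> / (6 * zt)"
  have zt0: "zt > 0" using zt_pos by simp
  have \<epsilon>0: "\<epsilon> > 0" and \<eta>0: "\<eta> > 0" using \<theta> c0_pos zt0 by (auto simp: \<epsilon>_def \<eta>_def)
  obtain C where C: "\<forall>N. \<bar>Phi N - c0 * (real N)\<^sup>2\<bar> \<le> \<epsilon> * (real N)\<^sup>2 + C"
    using Phi_asym[OF \<epsilon>0] by blast
  have C0: "C \<ge> 0" using C[rule_format, of 0] by (simp add: Phi_def)
  obtain N0 where N0: "\<forall>N\<ge>N0. zt - (\<Sum>k=1..N. 1 / (real k)\<^sup>2) \<le> \<theta> / 3"
    using zt_tail[of "\<theta>/3"] \<theta> by auto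
  define N1 where "N1 = max N0 (nat \<lceil>3 * (C + c0 / \<eta>) / (\<theta> * c0)\<rceil>)"
  have e1: "(\<epsilon> + c0 * \<eta>) * zt = \<theta> * c0 / 3" using zt0 by (simp add: \<epsilon>_def \<eta>_def field_simps)
  show ?thesis
  proof (intro exI allI impI)
    fix n and \<alpha> :: real assume n: "N1 \<le> n" and a0: "0 < \<alpha>" and a1: "\<alpha> \<le> 1"
    define \<beta> where "\<beta> = 1 - \<alpha>"
    have b: "0 \<le> \<beta>" "\<beta> \<le> 1" using a0 a1 by (auto simp: \<beta>_def)
    define sn where "sn = (\<Sum>k=1..n. 1 / (real k)\<^sup>2)"
    have sn_eq: "sn = (\<Sum>j<n. 1 / (real j + 1)\<^sup>2)" unfolding sn_def by (rule s_eq)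
    have sn_le: "sn \<le> zt" unfolding sn_def by (rule s_le_zt)
    define a where "a = (\<lambda>j. Phi (n div (j + 1)) - c0 * (real n)\<^sup>2 / (real j + 1)\<^sup>2)"
    define tl where "tl = SB \<beta> - (\<Sum>j<n. \<beta> ^ j / (real j + 1)\<^sup>2)"
    have tl: "0 \<le> tl" "tl \<le> zt - sn" using sb_tail[OF b, of n] unfolding tl_def sn_def by auto
    have fd: "fdens \<alpha> = c0 * \<alpha> * SB \<beta>" using fdens_eq[OF a0 a1] unfolding \<beta>_def .
    have "mu n \<alpha> = \<alpha> * (\<Sum>j<n. \<beta> ^ j * Phi (n div (j + 1)))" using mu_eq unfolding \<beta>_def .
    also have "(\<Sum>j<n. \<beta> ^ j * Phi (n div (j + 1))) = (\<Sum>j<n. \<beta> ^ j * a j) + c0 * (real n)\<^sup>2 * (\<Sum>j<n. \<beta> ^ j / (real j + 1)\<^sup>2)"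
      unfolding a_def by (simp add: sum_distrib_left sum.distrib[symmetric] algebra_simps)
    finally have "mu n \<alpha> - fdens \<alpha> * (real n)\<^sup>2 = \<alpha> * ((\<Sum>j<n. \<beta> ^ j * a j) - c0 * (real n)\<^sup>2 * tl)"
      unfolding fd tl_def by (simp add: algebra_simps)
    then have D: "\<bar>mu n \<alpha> - fdens \<alpha> * (real n)\<^sup>2\<bar> \<le> \<alpha> * ((\<Sum>j<n. \<bar>a j\<bar>) + c0 * (real n)\<^sup>2 * tl)"
    proof -
      assume eq: "mu n \<alpha> - fdens \<alpha> * (real n)\<^sup>2 = \<alpha> * ((\<Sum>j<n. \<beta> ^ j * a j) - c0 * (real n)\<^sup>2 * tl)"
      have "\<bar>\<Sum>j<n. \<beta> ^ j * a j\<bar> \<le> (\<Sum>j<n. \<bar>\<beta> ^ j * a j\<bar>)" by (rule sum_abs)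
      also have "\<dots> \<le> (\<Sum>j<n. \<bar>a j\<bar>)"
      proof (rule sum_mono)
        fix j have "\<bar>\<beta> ^ j\<bar> \<le> 1" using b by (simp add: power_le_one)
        then show "\<bar>\<beta> ^ j * a j\<bar> \<le> \<bar>a j\<bar>" by (simp add: abs_mult mult_left_le_one_le)
      qed
      finally have s: "\<bar>\<Sum>j<n. \<beta> ^ j * a j\<bar> \<le> (\<Sum>j<n. \<bar>a j\<bar>)" .
      have t: "0 \<le> c0 * (real n)\<^sup>2 * tl" using tl c0_pos by simp
      have "\<bar>(\<Sum>j<n. \<beta> ^ j * a j) - c0 * (real n)\<^sup>2 * tl\<bar> \<le> (\<Sum>j<n. \<bar>a j\<bar>) + c0 * (real n)\<^sup>2 * tl"
        using s t by linarith
      then show ?thesis unfolding eq abs_mult using a0 by (simp add: mult_left_mono)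
    qed
    have "(\<Sum>j<n. \<bar>a j\<bar>) \<le> (\<Sum>j<n. (\<epsilon> + c0 * \<eta>) * ((real n)\<^sup>2 / (real j + 1)\<^sup>2) + (C + c0 / \<eta>))"
      unfolding a_def using term_bound[OF C _ \<eta>0] \<epsilon>0 by (intro sum_mono) auto
    also have "\<dots> = (\<epsilon> + c0 * \<eta>) * (real n)\<^sup>2 * sn + real n * (C + c0 / \<eta>)"
      unfolding sn_eq by (simp add: sum.distrib sum_distrib_left)
    also have "\<dots> \<le> (\<epsilon> + c0 * \<eta>) * (real n)\<^sup>2 * zt + real n * (C + c0 / \<eta>)"
      using sn_le \<epsilon>0 \<eta>0 c0_pos by (intro add_right_mono mult_left_mono) auto
    also have "\<dots> = \<theta> * c0 / 3 * (real n)\<^sup>2 + real n * (C + c0 / \<eta>)"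
    proof -
      have "(\<epsilon> + c0 * \<eta>) * (real n)\<^sup>2 * zt = ((\<epsilon> + c0 * \<eta>) * zt) * (real n)\<^sup>2" by (simp only: mult_ac)
      then show ?thesis using e1 by simp
    qed
    finally have S1: "(\<Sum>j<n. \<bar>a j\<bar>) \<le> \<theta> * c0 / 3 * (real n)\<^sup>2 + real n * (C + c0 / \<eta>)" .
    have "3 * (C + c0 / \<eta>) / (\<theta> * c0) \<le> real n" using n unfolding N1_def by linarith
    then have "C + c0 / \<eta> \<le> \<theta> * c0 / 3 * real n" using \<theta> c0_pos by (simp add: field_simps)
    then have "real n * (C + c0 / \<eta>) \<le> real n * (\<theta> * c0 / 3 * real n)"
      by (intro mult_left_mono) auto
    then have S2: "real n * (C + c0 / \<eta>) \<le> \<theta> * c0 / 3 * (real n)\<^sup>2"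
      by (simp add: power2_eq_square mult_ac)
    have "zt - sn \<le> \<theta> / 3" using N0 n unfolding sn_def N1_def by auto
    then have "tl \<le> \<theta> / 3" using tl by linarith
    then have S3: "c0 * (real n)\<^sup>2 * tl \<le> c0 * (real n)\<^sup>2 * (\<theta> / 3)" using c0_pos by (intro mult_left_mono) auto
    have "(\<Sum>j<n. \<bar>a j\<bar>) + c0 * (real n)\<^sup>2 * tl \<le> \<theta> * c0 * (real n)\<^sup>2"
    proof -
      have "\<theta> * c0 / 3 * (real n)\<^sup>2 + \<theta> * c0 / 3 * (real n)\<^sup>2 + c0 * (real n)\<^sup>2 * (\<theta> / 3) = \<theta> * c0 * (real n)\<^sup>2"
        by (simp add: algebra_simps)
      then show ?thesis using S1 S2 S3 by linarith
    qed
    also have "\<dots> \<le> \<theta> * c0 * (real n)\<^sup>2 * SB \<beta>" using sb_ge1[OF b] \<theta> c0_pos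
    proof -
      have "0 \<le> \<theta> * c0 * (real n)\<^sup>2" using \<theta> c0_pos by simp
      then show ?thesis using sb_ge1[OF b] by (simp add: mult_le_cancel_left1)
    qed
    finally have "\<alpha> * ((\<Sum>j<n. \<bar>a j\<bar>) + c0 * (real n)\<^sup>2 * tl) \<le> \<alpha> * (\<theta> * c0 * (real n)\<^sup>2 * SB \<beta>)"
      using a0 by (intro mult_left_mono) auto
    then show "\<bar>mu n \<alpha> - fdens \<alpha> * (real n)\<^sup>2\<bar> \<le> \<theta> * fdens \<alpha> * (real n)\<^sup>2"
      using D unfolding fd by (simp add: algebra_simps)
  qed
qed

lemma binom_pow:
  fixes x y :: real
  assumes "finite V"
  shows "(\<Sum>A\<in>Pow V. x ^ card A * y ^ (card V - card A)) = (x + y) ^ card V"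
  using assms
proof (induction V rule: finite_induct)
  case empty then show ?case by simp
next
  case (insert a F)
  have fin: "finite (Pow F)" using insert by simp
  have disj: "Pow F \<inter> insert a ` Pow F = {}" using insert by auto
  have inj: "inj_on (insert a) (Pow F)" using insert by (auto simp: inj_on_def)
  have cF: "card (insert a F) = Suc (card F)" using insert by simp
  have "(\<Sum>A\<in>Pow (insert a F). x ^ card A * y ^ (card (insert a F) - card A))
      = (\<Sum>A\<in>Pow F. x ^ card A * y ^ (Suc (card F) - card A)) +
        (\<Sum>A\<in>insert a ` Pow F. x ^ card A * y ^ (Suc (card F) - card A))"
    unfolding Pow_insert cF using fin disj by (intro sum.union_disjoint) auto
  also have "(\<Sum>A\<in>Pow F. x ^ card A * y ^ (Suc (card F) - card A)) = y * (\<Sum>A\<in>Pow F. x ^ card A * y ^ (card F - card A))"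
    unfolding sum_distrib_left
  proof (rule sum.cong)
    fix A assume "A \<in> Pow F"
    then have "card A \<le> card F" using insert by (simp add: card_mono)
    then have "Suc (card F) - card A = Suc (card F - card A)" by simp
    then show "x ^ card A * y ^ (Suc (card F) - card A) = y * (x ^ card A * y ^ (card F - card A))" by simp
  qed simp
  also have "(\<Sum>A\<in>insert a ` Pow F. x ^ card A * y ^ (Suc (card F) - card A)) = x * (\<Sum>A\<in>Pow F. x ^ card A * y ^ (card F - card A))"
    unfolding sum_distrib_left sum.reindex[OF inj] o_def
  proof (rule sum.cong)
    fix A assume "A \<in> Pow F"
    then have "finite A" "a \<notin> A" using insert finite_subset by auto
    then show "x ^ card (insert a A) * y ^ (Suc (card F) - card (insert a A)) = x * (x ^ card A * y ^ (card F - card A))"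
      by simp
  qed simp
  finally show ?case using insert cF by (simp add: algebra_simps)
qed

definition wB :: "nat \<Rightarrow> real \<Rightarrow> nat set \<Rightarrow> real" where
  "wB n \<alpha> A = \<alpha> ^ card A * (1 - \<alpha>) ^ (n - card A)"

definition EB :: "nat \<Rightarrow> real \<Rightarrow> (nat set \<Rightarrow> real) \<Rightarrow> real" where
  "EB n \<alpha> g = (\<Sum>A\<in>Pow {1..n}. wB n \<alpha> A * g A)"

lemma probB_EB: "probB n \<alpha> P = EB n \<alpha> (\<lambda>A. if P A then 1 else 0)"
  unfolding probB_def EB_def wB_def by (intro sum.cong) auto

lemma miss_prob:
  assumes "S \<subseteq> {1..n}"
  shows "EB n \<alpha> (\<lambda>A. if A \<inter> S = {} then 1 else 0) = (1 - \<alpha>) ^ card S"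
proof -
  define U where "U = {1..n::nat}"
  have fU: "finite U" and cU: "card U = n" by (auto simp: U_def)
  have SU: "S \<subseteq> U" using assms by (simp add: U_def)
  have cS: "card S \<le> n" using SU fU cU card_mono by metis
  have cUS: "card (U - S) = n - card S" using SU fU cU by (simp add: card_Diff_subset finite_subset)
  have filt: "{A \<in> Pow U. A \<inter> S = {}} = Pow (U - S)" by auto
  have "EB n \<alpha> (\<lambda>A. if A \<inter> S = {} then 1 else 0) = (\<Sum>A\<in>Pow U. if A \<inter> S = {} then wB n \<alpha> A else 0)"
    unfolding EB_def U_def by (intro sum.cong) auto
  also have "\<dots> = (\<Sum>A\<in>{A \<in> Pow U. A \<inter> S = {}}. wB n \<alpha> A)"
    by (rule sum.inter_filter[symmetric]) (simp add: fU)
  also have "\<dots> = (\<Sum>A\<in>Pow (U - S). \<alpha> ^ card A * (1 - \<alpha>) ^ (card (U - S) - card A) * (1 - \<alpha>) ^ card S)"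
    unfolding filt
  proof (rule sum.cong)
    fix A assume "A \<in> Pow (U - S)"
    then have "card A \<le> card (U - S)" using fU by (simp add: card_mono)
    then have "n - card A = (card (U - S) - card A) + card S" using cUS cS by simp
    then show "wB n \<alpha> A = \<alpha> ^ card A * (1 - \<alpha>) ^ (card (U - S) - card A) * (1 - \<alpha>) ^ card S"
      unfolding wB_def by (simp add: power_add mult.assoc)
  qed simp
  also have "\<dots> = (\<alpha> + (1 - \<alpha>)) ^ card (U - S) * (1 - \<alpha>) ^ card S"
    unfolding sum_distrib_right[symmetric] using fU by (subst binom_pow) auto
  finally show ?thesis by simp
qed

lemma EB_one: "EB n \<alpha> (\<lambda>A. 1) = 1"
  using miss_prob[of "{}" n \<alpha>] by simp

lemma EB_add: "EB n \<alpha> (\<lambda>A. f A + g A) = EB n \<alpha> f + EB n \<alpha> g"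
  unfolding EB_def by (simp add: algebra_simps sum.distrib)

lemma EB_cmult: "EB n \<alpha> (\<lambda>A. c * f A) = c * EB n \<alpha> f"
  unfolding EB_def by (simp add: sum_distrib_left algebra_simps)

lemma EB_sum: "EB n \<alpha> (\<lambda>A. \<Sum>i\<in>I. f i A) = (\<Sum>i\<in>I. EB n \<alpha> (f i))"
  unfolding EB_def sum_distrib_left by (rule sum.swap)

lemma EB_const: "EB n \<alpha> (\<lambda>A. c) = c"
  using EB_cmult[where c=c and f="\<lambda>A. 1"] EB_one by simp

lemma wB_nonneg: "0 \<le> \<alpha> \<Longrightarrow> \<alpha> \<le> 1 \<Longrightarrow> 0 \<le> wB n \<alpha> A"
  unfolding wB_def by simp

lemma chebyshev:
  assumes "0 \<le> \<alpha>" "\<alpha> \<le> 1" "t > 0"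
    and "\<And>A. A \<subseteq> {1..n} \<Longrightarrow> P A \<Longrightarrow> t\<^sup>2 \<le> g A"
    and "\<And>A. A \<subseteq> {1..n} \<Longrightarrow> 0 \<le> g A"
  shows "probB n \<alpha> P \<le> EB n \<alpha> g / t\<^sup>2"
proof -
  have "probB n \<alpha> P = (\<Sum>A\<in>Pow {1..n}. wB n \<alpha> A * (if P A then 1 else 0))"
    unfolding probB_EB EB_def ..
  also have "\<dots> \<le> (\<Sum>A\<in>Pow {1..n}. wB n \<alpha> A * (g A / t\<^sup>2))"
  proof (rule sum_mono)
    fix A assume A: "A \<in> Pow {1..n}"
    have "(if P A then 1 else 0) \<le> g A / t\<^sup>2"
      using assms(3) assms(4)[of A] assms(5)[of A] A by (auto simp: field_simps)
    then show "wB n \<alpha> A * (if P A then 1 else 0) \<le> wB n \<alpha> A * (g A / t\<^sup>2)"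
      using wB_nonneg[OF assms(1,2)] by (intro mult_left_mono) auto
  qed
  also have "\<dots> = EB n \<alpha> g / t\<^sup>2" unfolding EB_def by (simp add: sum_divide_distrib)
  finally show ?thesis .
qed

definition Md :: "nat \<Rightarrow> nat \<Rightarrow> nat set" where "Md n d = {m\<in>{1..n}. d dvd m}"
definition ind :: "bool \<Rightarrow> real" where "ind b = (if b then 1 else 0)"
definition Yv :: "nat \<Rightarrow> nat set \<Rightarrow> real" where
  "Yv n A = (\<Sum>d=2..n. real (totient d) * ind (A \<inter> Md n d = {}))"
definition S0 :: "nat \<Rightarrow> real" where "S0 n = (\<Sum>d=2..n. real (totient d))"

lemma Md_sub: "Md n d \<subseteq> {1..n}" by (auto simp: Md_def)

lemma X_eq:
  assumes "A \<subseteq> {1..n}"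
  shows "real (degLcmQ A) = S0 n - Yv n A"
proof -
  have "real (degLcmQ A) = (\<Sum>d\<in>{d\<in>{2..n}. \<exists>a\<in>A. d dvd a}. real (totient d))"
    using degLcm_formula[OF assms] by simp
  also have "\<dots> = (\<Sum>d=2..n. if \<exists>a\<in>A. d dvd a then real (totient d) else 0)"
    by (rule sum.inter_filter) simp
  also have "\<dots> = (\<Sum>d=2..n. real (totient d) - real (totient d) * ind (A \<inter> Md n d = {}))"
  proof (rule sum.cong)
    fix d assume "d \<in> {2..n}"
    have "(\<exists>a\<in>A. d dvd a) \<longleftrightarrow> A \<inter> Md n d \<noteq> {}" using assms unfolding Md_def by blast
    then show "(if \<exists>a\<in>A. d dvd a then real (totient d) else 0) = real (totient d) - real (totient d) * ind (A \<inter> Md n d = {})"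
      by (auto simp: ind_def)
  qed simp
  finally show ?thesis unfolding S0_def Yv_def by (simp add: sum_subtractf)
qed

lemma card_Md: assumes "d > 0" shows "card (Md n d) = n div d"
proof -
  have "Md n d = (\<lambda>k. d * k) ` {1..n div d}"
  proof (intro equalityI subsetI)
    fix m assume "m \<in> Md n d"
    then obtain k where k: "m = d * k" "1 \<le> m" "m \<le> n" by (auto simp: Md_def)
    then have "1 \<le> k" by (cases k) auto
    moreover have "k \<le> n div d" using k assms by (subst less_eq_div_iff_mult_less_eq) (auto simp: mult.commute)
    ultimately show "m \<in> (\<lambda>k. d * k) ` {1..n div d}" using k by auto
  next
    fix m assume "m \<in> (\<lambda>k. d * k) ` {1..n div d}"
    then obtain k where k: "m = d * k" "k \<in> {1..n div d}" by (auto simp only: image_iff)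
    then have k: "m = d * k" "1 \<le> k" "k \<le> n div d" by auto
    then have "k * d \<le> n" using assms less_eq_div_iff_mult_less_eq by blast
    then show "m \<in> Md n d" using k assms by (auto simp: Md_def mult.commute)
  qed
  moreover have "inj_on (\<lambda>k. d * k) {1..n div d}" using assms by (auto simp: inj_on_def)
  ultimately show ?thesis by (simp add: card_image)
qed

lemma EY: "EB n \<alpha> (Yv n) = (\<Sum>d=2..n. real (totient d) * (1 - \<alpha>) ^ (n div d))"
proof -
  have "EB n \<alpha> (Yv n) = (\<Sum>d=2..n. EB n \<alpha> (\<lambda>A. real (totient d) * ind (A \<inter> Md n d = {})))"
    unfolding Yv_def by (rule EB_sum)
  also have "\<dots> = (\<Sum>d=2..n. real (totient d) * (1 - \<alpha>) ^ (n div d))"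
  proof (rule sum.cong)
    fix d assume "d \<in> {2..n}"
    then show "EB n \<alpha> (\<lambda>A. real (totient d) * ind (A \<inter> Md n d = {})) = real (totient d) * (1 - \<alpha>) ^ (n div d)"
      using miss_prob[OF Md_sub[of n d], where \<alpha>=\<alpha>] card_Md[of d n] by (simp add: EB_cmult ind_def)
  qed simp
  finally show ?thesis .
qed

lemma mu_S0: "S0 n - EB n \<alpha> (Yv n) = mu n \<alpha>"
  unfolding EY S0_def mu_def by (simp add: sum_subtractf algebra_simps)

lemma EY2: "EB n \<alpha> (\<lambda>A. (Yv n A)\<^sup>2) =
  (\<Sum>d=2..n. \<Sum>e=2..n. real (totient d) * real (totient e) * (1 - \<alpha>) ^ card (Md n d \<union> Md n e))"
proof -
  have sq: "(Yv n A)\<^sup>2 = (\<Sum>d=2..n. \<Sum>e=2..n. real (totient d) * real (totient e) * ind (A \<inter> (Md n d \<union> Md n e) = {}))" for A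
    unfolding Yv_def power2_eq_square sum_product
    by (intro sum.cong refl) (auto simp: ind_def)
  have "EB n \<alpha> (\<lambda>A. (Yv n A)\<^sup>2) = (\<Sum>d=2..n. \<Sum>e=2..n. EB n \<alpha> (\<lambda>A. real (totient d) * real (totient e) * ind (A \<inter> (Md n d \<union> Md n e) = {})))"
    unfolding sq by (simp add: EB_sum)
  also have "\<dots> = (\<Sum>d=2..n. \<Sum>e=2..n. real (totient d) * real (totient e) * (1 - \<alpha>) ^ card (Md n d \<union> Md n e))"
  proof (intro sum.cong refl)
    fix d e
    have "Md n d \<union> Md n e \<subseteq> {1..n}" using Md_sub by blast
    then show "EB n \<alpha> (\<lambda>A. real (totient d) * real (totient e) * ind (A \<inter> (Md n d \<union> Md n e) = {})) =
          real (totient d) * real (totient e) * (1 - \<alpha>) ^ card (Md n d \<union> Md n e)"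
      using miss_prob[of "Md n d \<union> Md n e" n \<alpha>] EB_cmult[where c="real (totient d) * real (totient e)" and f="\<lambda>A. ind (A \<inter> (Md n d \<union> Md n e) = {})"]
      by (simp add: ind_def)
  qed
  finally show ?thesis .
qed

lemma bern:
  fixes \<beta> :: real
  assumes "0 \<le> \<beta>" "\<beta> \<le> 1"
  shows "\<beta> ^ u - \<beta> ^ (u + c) \<le> (1 - \<beta>) * real c"
proof -
  have "\<beta> ^ u - \<beta> ^ (u + c) = \<beta> ^ u * (1 - \<beta> ^ c)" by (simp add: power_add algebra_simps)
  also have "\<dots> \<le> 1 * (1 - \<beta> ^ c)" using assms by (intro mult_right_mono) (auto simp: power_le_one)
  also have "1 - \<beta> ^ c = (1 - \<beta>) * (\<Sum>i<c. \<beta> ^ i)" by (rule one_diff_power_eq)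
  also have "\<dots> \<le> (1 - \<beta>) * (\<Sum>i<c. 1)" using assms by (intro mult_left_mono sum_mono) (auto simp: power_le_one)
  finally show ?thesis by simp
qed

definition gdiv :: "nat \<Rightarrow> nat \<Rightarrow> real" where
  "gdiv n m = (\<Sum>d=2..n. real (totient d) * ind (d dvd m))"

lemma gdiv_bounds: assumes "m \<ge> 1" shows "0 \<le> gdiv n m" "gdiv n m \<le> real m"
proof -
  show "0 \<le> gdiv n m" unfolding gdiv_def by (intro sum_nonneg) (auto simp: ind_def)
  have "gdiv n m = (\<Sum>d\<in>{d\<in>{2..n}. d dvd m}. real (totient d))"
    unfolding gdiv_def by (subst sum.inter_filter) (auto simp: ind_def intro!: sum.cong)
  also have "\<dots> \<le> (\<Sum>d | d dvd m. real (totient d))"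
    using assms by (intro sum_mono2) auto
  also have "\<dots> = real m" using totient_divisor_sum[of m] by (metis of_nat_sum)
  finally show "gdiv n m \<le> real m" .
qed

lemma count_bound:
  "(\<Sum>d=2..n. \<Sum>e=2..n. real (totient d) * real (totient e) * real (card (Md n d \<inter> Md n e))) \<le> real n ^ 3"
proof -
  have cI: "real (card (Md n d \<inter> Md n e)) = (\<Sum>m=1..n. ind (d dvd m) * ind (e dvd m))" for d e
  proof -
    have "Md n d \<inter> Md n e = {m\<in>{1..n}. d dvd m \<and> e dvd m}" by (auto simp: Md_def)
    then have "card (Md n d \<inter> Md n e) = (\<Sum>m=1..n. if d dvd m \<and> e dvd m then 1 else 0)"
      by (simp add: sum.inter_filter[symmetric])
    then show ?thesis by (auto simp: ind_def intro!: sum.cong)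
  qed
  have "(\<Sum>d=2..n. \<Sum>e=2..n. real (totient d) * real (totient e) * real (card (Md n d \<inter> Md n e)))
      = (\<Sum>d=2..n. \<Sum>e=2..n. \<Sum>m=1..n. (real (totient d) * ind (d dvd m)) * (real (totient e) * ind (e dvd m)))"
    unfolding cI by (simp add: sum_distrib_left algebra_simps)
  also have "\<dots> = (\<Sum>m=1..n. (gdiv n m)\<^sup>2)"
    unfolding gdiv_def power2_eq_square sum_product
    by (subst sum.swap) (rule sum.swap)
  also have "\<dots> \<le> (\<Sum>m=1..n. (real n)\<^sup>2)"
  proof (rule sum_mono)
    fix m assume m: "m \<in> {1..n}"
    have "gdiv n m \<le> real n" using gdiv_bounds(2)[of m n] m by auto
    then show "(gdiv n m)\<^sup>2 \<le> (real n)\<^sup>2" using gdiv_bounds(1)[of m n] m by (intro power_mono) auto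
  qed
  also have "\<dots> = real n ^ 3" by (simp add: power2_eq_square power3_eq_cube)
  finally show ?thesis .
qed

lemma var_bound:
  assumes a: "0 < \<alpha>" "\<alpha> \<le> 1"
  shows "EB n \<alpha> (\<lambda>A. (Yv n A - EB n \<alpha> (Yv n))\<^sup>2) \<le> \<alpha> * real n ^ 3"
proof -
  define m where "m = EB n \<alpha> (Yv n)"
  define \<beta> where "\<beta> = 1 - \<alpha>"
  have b: "0 \<le> \<beta>" "\<beta> \<le> 1" using a by (auto simp: \<beta>_def)
  define t where "t = (\<lambda>d. real (totient d))"
  have "EB n \<alpha> (\<lambda>A. (Yv n A - m)\<^sup>2) = EB n \<alpha> (\<lambda>A. (Yv n A)\<^sup>2 + ((-2 * m) * Yv n A + m\<^sup>2))"
    by (simp add: power2_eq_square algebra_simps)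
  also have "\<dots> = EB n \<alpha> (\<lambda>A. (Yv n A)\<^sup>2) - m\<^sup>2"
    unfolding EB_add EB_cmult EB_const m_def[symmetric] by (simp add: power2_eq_square)
  finally have V: "EB n \<alpha> (\<lambda>A. (Yv n A - m)\<^sup>2) = EB n \<alpha> (\<lambda>A. (Yv n A)\<^sup>2) - m\<^sup>2" .
  have m_eq: "m = (\<Sum>d=2..n. t d * \<beta> ^ card (Md n d))"
    unfolding m_def EY t_def \<beta>_def by (intro sum.cong refl) (simp add: card_Md)
  have m2: "m\<^sup>2 = (\<Sum>d=2..n. \<Sum>e=2..n. t d * t e * \<beta> ^ (card (Md n d) + card (Md n e)))"
    unfolding m_eq power2_eq_square sum_product by (simp add: power_add algebra_simps)
  have "EB n \<alpha> (\<lambda>A. (Yv n A)\<^sup>2) - m\<^sup>2 =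
      (\<Sum>d=2..n. \<Sum>e=2..n. t d * t e * (\<beta> ^ card (Md n d \<union> Md n e) - \<beta> ^ (card (Md n d) + card (Md n e))))"
    unfolding EY2 m2 t_def \<beta>_def by (simp add: sum_subtractf algebra_simps)
  also have "\<dots> \<le> (\<Sum>d=2..n. \<Sum>e=2..n. t d * t e * (\<alpha> * real (card (Md n d \<inter> Md n e))))"
  proof (intro sum_mono mult_left_mono)
    fix d e
    have fin: "finite (Md n d)" "finite (Md n e)" by (auto simp: Md_def)
    have "card (Md n d) + card (Md n e) = card (Md n d \<union> Md n e) + card (Md n d \<inter> Md n e)"
      using card_Un_Int[OF fin] .
    then show "\<beta> ^ card (Md n d \<union> Md n e) - \<beta> ^ (card (Md n d) + card (Md n e)) \<le> \<alpha> * real (card (Md n d \<inter> Md n e))"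
      using bern[OF b, of "card (Md n d \<union> Md n e)" "card (Md n d \<inter> Md n e)"] by (simp add: \<beta>_def)
    show "0 \<le> t d * t e" by (simp add: t_def)
  qed
  also have "\<dots> = \<alpha> * (\<Sum>d=2..n. \<Sum>e=2..n. real (totient d) * real (totient e) * real (card (Md n d \<inter> Md n e)))"
    by (simp add: sum_distrib_left t_def algebra_simps)
  also have "\<dots> \<le> \<alpha> * real n ^ 3" using count_bound a by (intro mult_left_mono) auto
  finally show ?thesis using V m_def by simp
qed

lemma prob_dev:
  assumes a: "0 < \<alpha>" "\<alpha> \<le> 1" and t: "t > 0"
  shows "probB n \<alpha> (\<lambda>A. \<bar>real (degLcmQ A) - mu n \<alpha>\<bar> > t) \<le> \<alpha> * real n ^ 3 / t\<^sup>2"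
proof -
  define m where "m = EB n \<alpha> (Yv n)"
  have "probB n \<alpha> (\<lambda>A. \<bar>real (degLcmQ A) - mu n \<alpha>\<bar> > t) \<le> EB n \<alpha> (\<lambda>A. (Yv n A - m)\<^sup>2) / t\<^sup>2"
  proof (rule chebyshev)
    fix A assume A: "A \<subseteq> {1..n}" and P: "\<bar>real (degLcmQ A) - mu n \<alpha>\<bar> > t"
    have "real (degLcmQ A) - mu n \<alpha> = m - Yv n A"
      using X_eq[OF A] mu_S0[of n \<alpha>] unfolding m_def by simp
    then have "t < \<bar>Yv n A - m\<bar>" using P by simp
    then have "t\<^sup>2 \<le> \<bar>Yv n A - m\<bar>\<^sup>2" using t by (intro power_mono) auto
    then show "t\<^sup>2 \<le> (Yv n A - m)\<^sup>2" by simp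
  qed (use a t in auto)
  also have "\<dots> \<le> \<alpha> * real n ^ 3 / t\<^sup>2"
    using var_bound[OF a, of n] t unfolding m_def by (intro divide_right_mono) auto
  finally show ?thesis .
qed

lemma probB_mono:
  assumes "0 \<le> \<alpha>" "\<alpha> \<le> 1" "\<And>A. A \<subseteq> {1..n} \<Longrightarrow> P A \<Longrightarrow> Q A"
  shows "probB n \<alpha> P \<le> probB n \<alpha> Q"
  unfolding probB_def using assms by (intro sum_mono) auto

theorem theorem1p4:
  fixes \<epsilon> \<delta> :: real
  assumes "\<epsilon> > 0" and "\<delta> > 0"
  shows "\<exists>M>0. \<forall>(n::nat) (\<alpha>::real). n > 0 \<longrightarrow> 0 < \<alpha> \<longrightarrow> \<alpha> \<le> 1 \<longrightarrow> \<alpha> * real n \<ge> M \<longrightarrow>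
           probB n \<alpha> (\<lambda>A. \<bar>real (degLcmQ A) - fdens \<alpha> * (real n)\<^sup>2\<bar> > \<epsilon> * fdens \<alpha> * (real n)\<^sup>2) \<le> \<delta>"
proof -
  have e2: "\<epsilon> / 2 > 0" using assms by simp
  obtain N1 where N1: "\<forall>n (\<alpha>::real). n \<ge> N1 \<longrightarrow> 0 < \<alpha> \<longrightarrow> \<alpha> \<le> 1 \<longrightarrow>
           \<bar>mu n \<alpha> - fdens \<alpha> * (real n)\<^sup>2\<bar> \<le> \<epsilon> / 2 * fdens \<alpha> * (real n)\<^sup>2"
    using MU_close[OF e2] by blast
  define K where "K = 4 / (\<epsilon>\<^sup>2 * c0\<^sup>2 * \<delta>)"
  define M where "M = max (real N1) (max 1 K)"
  have M0: "M > 0" unfolding M_def by simp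
  show ?thesis
  proof (intro exI[of _ M] conjI allI impI M0)
    fix n and \<alpha> :: real
    assume n0: "n > 0" and a0: "0 < \<alpha>" and a1: "\<alpha> \<le> 1" and aM: "\<alpha> * real n \<ge> M"
    have "\<alpha> * real n \<le> 1 * real n" using a1 by (intro mult_right_mono) auto
    then have "real N1 \<le> real n" using aM unfolding M_def by linarith
    then have nN1: "n \<ge> N1" by simp
    have close: "\<bar>mu n \<alpha> - fdens \<alpha> * (real n)\<^sup>2\<bar> \<le> \<epsilon> / 2 * fdens \<alpha> * (real n)\<^sup>2"
      using N1 nN1 a0 a1 by blast
    have b: "0 \<le> 1 - \<alpha>" "1 - \<alpha> \<le> 1" using a0 a1 by auto
    have fge: "fdens \<alpha> \<ge> c0 * \<alpha>"
    proof -
      have "c0 * \<alpha> * 1 \<le> c0 * \<alpha> * SB (1 - \<alpha>)"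
        using sb_ge1[OF b] c0_pos a0 by (intro mult_left_mono) auto
      then show ?thesis using fdens_eq[OF a0 a1] by simp
    qed
    have npos: "real n > 0" using n0 by simp
    define t where "t = \<epsilon> / 2 * fdens \<alpha> * (real n)\<^sup>2"
    have tlow: "\<epsilon> / 2 * (c0 * \<alpha>) * (real n)\<^sup>2 \<le> t"
      unfolding t_def using fge assms npos by (intro mult_right_mono mult_left_mono) auto
    have tpos0: "0 < \<epsilon> / 2 * (c0 * \<alpha>) * (real n)\<^sup>2" using assms c0_pos a0 npos by simp
    then have tpos: "t > 0" using tlow by linarith
    have "probB n \<alpha> (\<lambda>A. \<bar>real (degLcmQ A) - fdens \<alpha> * (real n)\<^sup>2\<bar> > \<epsilon> * fdens \<alpha> * (real n)\<^sup>2)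
        \<le> probB n \<alpha> (\<lambda>A. \<bar>real (degLcmQ A) - mu n \<alpha>\<bar> > t)"
    proof (rule probB_mono)
      fix A assume "\<bar>real (degLcmQ A) - fdens \<alpha> * (real n)\<^sup>2\<bar> > \<epsilon> * fdens \<alpha> * (real n)\<^sup>2"
      moreover have "\<epsilon> * fdens \<alpha> * (real n)\<^sup>2 = t + \<epsilon> / 2 * fdens \<alpha> * (real n)\<^sup>2" unfolding t_def by simp
      ultimately show "\<bar>real (degLcmQ A) - mu n \<alpha>\<bar> > t" using close by linarith
    qed (use a0 a1 in auto)
    also have "\<dots> \<le> \<alpha> * real n ^ 3 / t\<^sup>2" using prob_dev[OF a0 a1 tpos] .
    also have "\<dots> \<le> \<alpha> * real n ^ 3 / (\<epsilon> / 2 * (c0 * \<alpha>) * (real n)\<^sup>2)\<^sup>2"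
      using tlow tpos0 a0 npos by (intro divide_left_mono power_mono mult_pos_pos) auto
    also have "\<dots> = 4 / (\<epsilon>\<^sup>2 * c0\<^sup>2) / (\<alpha> * real n)"
      using a0 npos assms c0_pos by (simp add: field_simps power2_eq_square power3_eq_cube)
    also have "\<dots> \<le> 4 / (\<epsilon>\<^sup>2 * c0\<^sup>2) / K"
    proof (rule divide_left_mono)
      show "K \<le> \<alpha> * real n" using aM unfolding M_def by linarith
      show "0 \<le> 4 / (\<epsilon>\<^sup>2 * c0\<^sup>2)" by simp
      show "0 < \<alpha> * real n * K" using a0 npos assms c0_pos by (simp add: K_def)
    qed
    also have "\<dots> = \<delta>" unfolding K_def using assms c0_pos by (simp add: field_simps)
    finally show "probB n \<alpha> (\<lambda>A. \<bar>real (degLcmQ A) - fdens \<alpha> * (real n)\<^sup>2\<bar> > \<epsilon> * fdens \<alpha> * (real n)\<^sup>2) \<le> \<delta>" .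
  qed
qed

end
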